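(* For any fixed $\epsilon>0$, the $\epsilon$-\textsc{MFS} problem can be solved in $n^{O(\log n)}$ steps, where $n$ is the input size.
   Context: Let $\Delta_{m}$ denote the set of probability vectors in $\mathbb{R}^{m}$. $\epsilon$-\textsc{MFS} (maximum $\epsilon$-feasible subsystem of linear inequalities): given a matrix $A\in[-1,1]^{n_{\text{row}}\times n_{\text{col}}}$, let $\mathbf{x}^\ast\in\Delta_{n_{\text{col}}}$ be a probability vector maximizing $k^\ast=\sum_{i\in[n_{\text{row}}]}I[w^\ast_i\ge0]$ where $\mathbf{w}^\ast=A\mathbf{x}^\ast$ ($I$ is the indicator function). The task is to find a probability vector $\mathbf{x}\in\Delta_{n_{\text{col}}}$ such that, with $\mathbf{w}=A\mathbf{x}$, $\sum_{i\in[n_{\text{row}}]}I[w_i\ge-\epsilon]\ge k^\ast$. *)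

theory Defs
  imports Complex_Main
begin

text \<open>A matrix with n_row rows and n_col columns is a function A :: nat => nat => real,
  of which only the entries A i j with i < n_row, j < n_col are relevant.
  Vectors of R^m are functions nat => real restricted to indices < m.\<close>

definition prob_simplex :: "nat \<Rightarrow> (nat \<Rightarrow> real) set" where
  "prob_simplex m = {x. (\<forall>j<m. 0 \<le> x j) \<and> (\<Sum>j<m. x j) = 1}"

definition mat_vec :: "(nat \<Rightarrow> nat \<Rightarrow> real) \<Rightarrow> nat \<Rightarrow> (nat \<Rightarrow> real) \<Rightarrow> nat \<Rightarrow> real" where
  "mat_vec A ncol x i = (\<Sum>j<ncol. A i j * x j)"

definition num_feasible :: "(nat \<Rightarrow> nat \<Rightarrow> real) \<Rightarrow> nat \<Rightarrow> nat \<Rightarrow> real \<Rightarrow> (nat \<Rightarrow> real) \<Rightarrow> nat" where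
  "num_feasible A nrow ncol t x = card {i. i < nrow \<and> mat_vec A ncol x i \<ge> - t}"

definition mfs_opt :: "(nat \<Rightarrow> nat \<Rightarrow> real) \<Rightarrow> nat \<Rightarrow> nat \<Rightarrow> nat" where
  "mfs_opt A nrow ncol = Max {num_feasible A nrow ncol 0 x | x. x \<in> prob_simplex ncol}"

definition eps_mfs_solution :: "real \<Rightarrow> (nat \<Rightarrow> nat \<Rightarrow> real) \<Rightarrow> nat \<Rightarrow> nat \<Rightarrow> (nat \<Rightarrow> real) \<Rightarrow> bool" where
  "eps_mfs_solution eps A nrow ncol x \<longleftrightarrow>
     x \<in> prob_simplex ncol \<and> num_feasible A nrow ncol eps x \<ge> mfs_opt A nrow ncol"

text \<open>A unit-cost real RAM (Blum-Shub-Smale style): integer registers (used for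
  indices/addresses; only addition and subtraction) and real registers (exact field
  arithmetic and comparisons); no conversion from reals to integers (no floor).
  Each executed instruction costs one step.\<close>

datatype instr =
    IConst nat int
  | IAdd nat nat nat
  | ISub nat nat nat
  | ILoad nat nat
  | IStore nat nat
  | IJmpLe nat nat nat
  | RConst nat int
  | RAdd nat nat nat
  | RSub nat nat nat
  | RMul nat nat nat
  | RDiv nat nat nat
  | RLoad nat nat
  | RStore nat nat
  | RJmpLe nat nat nat
  | OfInt nat nat
  | Halt

type_synonym state = "nat \<times> (nat \<Rightarrow> int) \<times> (nat \<Rightarrow> real)"

definition halted :: "instr list \<Rightarrow> state \<Rightarrow> bool" where
  "halted P s \<longleftrightarrow> (case s of (pc, _, _) \<Rightarrow> pc \<ge> length P \<or> P ! pc = Halt)"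

fun exec :: "instr \<Rightarrow> state \<Rightarrow> state" where
  "exec (IConst a k) (pc, I, R) = (Suc pc, I(a := k), R)"
| "exec (IAdd a b c) (pc, I, R) = (Suc pc, I(a := I b + I c), R)"
| "exec (ISub a b c) (pc, I, R) = (Suc pc, I(a := I b - I c), R)"
| "exec (ILoad a b) (pc, I, R) = (Suc pc, I(a := I (nat (I b))), R)"
| "exec (IStore a b) (pc, I, R) = (Suc pc, I(nat (I a) := I b), R)"
| "exec (IJmpLe a b l) (pc, I, R) = ((if I a \<le> I b then l else Suc pc), I, R)"
| "exec (RConst a k) (pc, I, R) = (Suc pc, I, R(a := of_int k))"
| "exec (RAdd a b c) (pc, I, R) = (Suc pc, I, R(a := R b + R c))"
| "exec (RSub a b c) (pc, I, R) = (Suc pc, I, R(a := R b - R c))"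
| "exec (RMul a b c) (pc, I, R) = (Suc pc, I, R(a := R b * R c))"
| "exec (RDiv a b c) (pc, I, R) = (Suc pc, I, R(a := R b / R c))"
| "exec (RLoad a b) (pc, I, R) = (Suc pc, I, R(a := R (nat (I b))))"
| "exec (RStore a b) (pc, I, R) = (Suc pc, I, R(nat (I a) := R b))"
| "exec (RJmpLe a b l) (pc, I, R) = ((if R a \<le> R b then l else Suc pc), I, R)"
| "exec (OfInt a b) (pc, I, R) = (Suc pc, I, R(a := of_int (I b)))"
| "exec Halt s = s"

definition step :: "instr list \<Rightarrow> state \<Rightarrow> state" where
  "step P s = (if halted P s then s else exec (P ! fst s) s)"

definition run :: "instr list \<Rightarrow> nat \<Rightarrow> state \<Rightarrow> state" where
  "run P t s = (step P ^^ t) s"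

definition init_state :: "(nat \<Rightarrow> nat \<Rightarrow> real) \<Rightarrow> nat \<Rightarrow> nat \<Rightarrow> state" where
  "init_state A nrow ncol =
     (0, (\<lambda>a. if a = 0 then int nrow else if a = 1 then int ncol else 0),
         (\<lambda>a. if a < nrow * ncol then A (a div ncol) (a mod ncol) else 0))"

definition ram_output :: "state \<Rightarrow> nat \<Rightarrow> real" where
  "ram_output s = snd (snd s)"

end

theory Submission
  imports Defs "HOL-Library.FuncSet"
begin

lemma exp_le_quad:
  fixes y :: real
  assumes "\<bar>y\<bar> \<le> 1"
  shows "exp y \<le> 1 + y + y^2"
proof (cases "0 \<le> y")
  case True then show ?thesis using exp_bound[of y] assms by auto
next
  case False
  have h1: "1 - y \<le> exp (-y)" using exp_ge_add_one_self[of "-y"] by simp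
  have pos: "0 < 1 - y" using False by simp
  have "exp y = 1 / exp (-y)" by (simp add: exp_minus field_simps)
  also have "\<dots> \<le> 1 / (1 - y)" using h1 pos by (intro divide_left_mono) auto
  also have "\<dots> \<le> 1 + y + y^2"
  proof -
    have "(1 - y) * (1 + y + y^2) = 1 - y^3" by (simp add: algebra_simps power2_eq_square power3_eq_cube)
    moreover have "y^3 \<le> 0" using False mult_nonneg_nonpos[of "y*y" y] by (simp add: power3_eq_cube)
    ultimately have "1 \<le> (1 - y) * (1 + y + y^2)" by simp
    then show ?thesis using pos by (simp add: divide_le_eq mult.commute)
  qed
  finally show ?thesis .
qed

lemma mgf_bound:
  fixes x a :: "nat \<Rightarrow> real" and lam :: real
  assumes x: "x \<in> prob_simplex n" and a: "\<And>j. j < n \<Longrightarrow> \<bar>a j\<bar> \<le> 1"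
    and mu: "0 \<le> (\<Sum>j<n. a j * x j)" and lam: "0 \<le> lam" "lam \<le> 1"
  shows "(\<Sum>j<n. x j * exp (- lam * a j)) \<le> exp (lam^2)"
proof -
  have x0: "\<And>j. j < n \<Longrightarrow> 0 \<le> x j" and x1: "(\<Sum>j<n. x j) = 1"
    using x by (auto simp: prob_simplex_def)
  have "(\<Sum>j<n. x j * exp (- lam * a j)) \<le> (\<Sum>j<n. x j * (1 - lam * a j + lam^2))"
  proof (rule sum_mono)
    fix j assume "j \<in> {..<n}"
    then have j: "j < n" by simp
    have ab: "\<bar>- lam * a j\<bar> \<le> 1" using a[OF j] lam by (simp add: abs_mult mult_le_one)
    have "exp (- lam * a j) \<le> 1 + (- lam * a j) + (- lam * a j)^2" by (rule exp_le_quad[OF ab])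
    also have "(- lam * a j)^2 = lam^2 * (a j)^2" by (simp add: power_mult_distrib)
    also have "lam^2 * (a j)^2 \<le> lam^2 * 1"
    proof (rule mult_left_mono)
      have "\<bar>a j\<bar>^2 \<le> 1^2" using a[OF j] by (intro power_mono) auto
      then show "(a j)^2 \<le> 1" by simp
    qed simp
    finally have "exp (- lam * a j) \<le> 1 - lam * a j + lam^2" by simp
    then show "x j * exp (- lam * a j) \<le> x j * (1 - lam * a j + lam^2)"
      using x0[OF j] by (intro mult_left_mono)
  qed
  also have "\<dots> = (\<Sum>j<n. x j) - lam * (\<Sum>j<n. a j * x j) + lam^2 * (\<Sum>j<n. x j)"
    by (simp add: algebra_simps sum.distrib sum_subtractf sum_distrib_left sum_distrib_right)
  also have "\<dots> \<le> 1 + lam^2" using x1 mu lam by simp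
  also have "\<dots> \<le> exp (lam^2)" by simp
  finally show ?thesis .
qed

lemma sparsify:
  fixes A :: "nat \<Rightarrow> nat \<Rightarrow> real" and x :: "nat \<Rightarrow> real" and m L k :: nat
  assumes x: "x \<in> prob_simplex ncol" and A: "\<forall>i<nrow. \<forall>j<ncol. \<bar>A i j\<bar> \<le> 1"
    and m: "m \<ge> 1" and k: "k = 4*m^2*(L+1)" and L: "nrow < 2^L"
  shows "\<exists>t. (\<forall>l<k. t l < ncol) \<and>
     (\<forall>i<nrow. 0 \<le> mat_vec A ncol x i \<longrightarrow> - real k \<le> real m * (\<Sum>l<k. A i (t l)))"
proof -
  define Ps where "Ps = PiE {..<k} (\<lambda>_. {..<ncol})"
  define W where "W t = (\<Prod>l<k. x (t l))" for t
  define G where "G = {i. i<nrow \<and> 0 \<le> mat_vec A ncol x i}"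
  define Bad where "Bad i = {t\<in>Ps. real m * (\<Sum>l<k. A i (t l)) < - real k}" for i
  define lam where "lam = 1 / (2 * real m)"
  have x0: "\<And>j. j < ncol \<Longrightarrow> 0 \<le> x j" and x1: "(\<Sum>j<ncol. x j) = 1"
    using x by (auto simp: prob_simplex_def)
  have finPs: "finite Ps" unfolding Ps_def by (simp add: finite_PiE)
  have W0: "\<And>t. t \<in> Ps \<Longrightarrow> 0 \<le> W t"
    unfolding W_def Ps_def by (intro prod_nonneg) (auto intro: x0)
  have Wsum: "(\<Sum>t\<in>Ps. W t) = 1"
  proof -
    have "(\<Prod>l<k. \<Sum>j<ncol. x j) = (\<Sum>t\<in>Ps. W t)"
      unfolding Ps_def W_def by (rule prod_sum_PiE) auto
    then show ?thesis using x1 by simp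
  qed
  have mpos: "0 < real m" using m by simp
  have lam0: "0 \<le> lam" "lam \<le> 1" using m unfolding lam_def by (auto simp: field_simps)
  have badb: "(\<Sum>t\<in>Bad i. W t) \<le> exp (- real (L+1))" if iG: "i \<in> G" for i
  proof -
    define a where "a j = A i j" for j
    have ia: "i < nrow" "0 \<le> (\<Sum>j<ncol. a j * x j)" using iG by (auto simp: G_def a_def mat_vec_def)
    have abd: "\<And>j. j < ncol \<Longrightarrow> \<bar>a j\<bar> \<le> 1" using A ia(1) by (auto simp: a_def)
    define E where "E t = exp (- lam * (\<Sum>l<k. a (t l)) - lam * real k / real m)" for t
    have "(\<Sum>t\<in>Bad i. W t) \<le> (\<Sum>t\<in>Bad i. W t * E t)"
    proof (rule sum_mono)
      fix t assume t: "t \<in> Bad i"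
      then have tP: "t \<in> Ps" and lt: "real m * (\<Sum>l<k. a (t l)) < - real k"
        by (auto simp: Bad_def a_def)
      have "(\<Sum>l<k. a (t l)) + real k / real m < 0"
        using lt mpos by (simp add: field_simps)
      then have "0 \<le> - lam * ((\<Sum>l<k. a (t l)) + real k / real m)"
        using lam0 by (intro mult_nonpos_nonpos) auto
      then have "1 \<le> E t" unfolding E_def by (simp add: algebra_simps)
      then show "W t \<le> W t * E t" using W0[OF tP] by (simp add: mult_le_cancel_left1)
    qed
    also have "\<dots> \<le> (\<Sum>t\<in>Ps. W t * E t)"
      by (rule sum_mono2[OF finPs]) (auto simp: Bad_def E_def intro!: mult_nonneg_nonneg W0)
    also have "\<dots> = (\<Sum>t\<in>Ps. exp (- lam * real k / real m) * (\<Prod>l<k. x (t l) * exp (- lam * a (t l))))"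
    proof (rule sum.cong[OF refl])
      fix t
      have "E t = exp (- lam * real k / real m) * exp (\<Sum>l<k. - lam * a (t l))"
        unfolding E_def by (simp add: exp_add[symmetric] sum_distrib_left algebra_simps)
      also have "exp (\<Sum>l<k. - lam * a (t l)) = (\<Prod>l<k. exp (- lam * a (t l)))"
        by (simp add: exp_sum)
      finally show "W t * E t = exp (- lam * real k / real m) * (\<Prod>l<k. x (t l) * exp (- lam * a (t l)))"
        by (simp add: W_def prod.distrib)
    qed
    also have "\<dots> = exp (- lam * real k / real m) * (\<Prod>l<k. \<Sum>j<ncol. x j * exp (- lam * a j))"
    proof -
      have "(\<Sum>t\<in>Ps. \<Prod>l<k. x (t l) * exp (- lam * a (t l))) = (\<Prod>l<k. \<Sum>j<ncol. x j * exp (- lam * a j))"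
        unfolding Ps_def by (rule prod_sum_PiE[symmetric]) auto
      then show ?thesis by (simp add: sum_distrib_left[symmetric])
    qed
    also have "\<dots> \<le> exp (- lam * real k / real m) * (\<Prod>l<(k::nat). exp (lam^2))"
    proof (rule mult_left_mono)
      show "(\<Prod>l<k. \<Sum>j<ncol. x j * exp (- lam * a j)) \<le> (\<Prod>l<k. exp (lam^2))"
      proof (rule prod_mono)
        fix l
        show "0 \<le> (\<Sum>j<ncol. x j * exp (- lam * a j)) \<and> (\<Sum>j<ncol. x j * exp (- lam * a j)) \<le> exp (lam^2)"
          using mgf_bound[OF x abd ia(2) lam0] x0 by (auto intro!: sum_nonneg)
      qed
    qed simp
    also have "\<dots> = exp (- lam * real k / real m + real k * lam^2)"
      by (simp add: exp_add[symmetric] exp_of_nat_mult[symmetric] algebra_simps)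
    also have "- lam * real k / real m + real k * lam^2 = - real (L+1)"
      using mpos unfolding lam_def k by (simp add: field_simps power2_eq_square)
    finally show ?thesis .
  qed
  have "\<exists>t\<in>Ps. \<forall>i\<in>G. t \<notin> Bad i"
  proof (rule ccontr)
    assume "\<not> ?thesis"
    then have cov: "\<And>t. t \<in> Ps \<Longrightarrow> \<exists>i\<in>G. t \<in> Bad i" by blast
    have finG: "finite G" unfolding G_def by simp
    have "1 = (\<Sum>t\<in>Ps. W t)" using Wsum by simp
    also have "\<dots> \<le> (\<Sum>t\<in>Ps. \<Sum>i\<in>G. if t \<in> Bad i then W t else 0)"
    proof (rule sum_mono)
      fix t assume t: "t \<in> Ps"
      then obtain i where i: "i \<in> G" "t \<in> Bad i" using cov by blast
      have "W t = (if t \<in> Bad i then W t else 0)" using i by simp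
      also have "\<dots> \<le> (\<Sum>i\<in>G. if t \<in> Bad i then W t else 0)"
        by (rule member_le_sum[OF i(1)]) (use W0[OF t] finG in auto)
      finally show "W t \<le> (\<Sum>i\<in>G. if t \<in> Bad i then W t else 0)" .
    qed
    also have "\<dots> = (\<Sum>i\<in>G. \<Sum>t\<in>Ps. if t \<in> Bad i then W t else 0)" by (rule sum.swap)
    also have "\<dots> = (\<Sum>i\<in>G. \<Sum>t\<in>Bad i. W t)"
    proof (rule sum.cong[OF refl])
      fix i
      have "Bad i \<subseteq> Ps" by (auto simp: Bad_def)
      then show "(\<Sum>t\<in>Ps. if t \<in> Bad i then W t else 0) = (\<Sum>t\<in>Bad i. W t)"
        using finPs by (simp add: sum.If_cases Int_absorb1)
    qed
    also have "\<dots> \<le> (\<Sum>i\<in>G. exp (- real (L+1)))" by (rule sum_mono) (rule badb)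
    also have "\<dots> = real (card G) * exp (- real (L+1))" by simp
    also have "\<dots> < 1"
    proof -
      have "G \<subseteq> {..<nrow}" unfolding G_def by auto
      then have cG: "card G \<le> nrow" using card_mono[of "{..<nrow}" G] by simp
      have "real nrow < 2 ^ L" using L by (metis of_nat_less_numeral_power_cancel_iff)
      also have "(2::real) ^ L \<le> exp 1 ^ L"
        using exp_ge_add_one_self[of 1] by (intro power_mono) auto
      also have "exp 1 ^ L = exp (real L)" by (simp add: exp_of_nat_mult[symmetric])
      also have "\<dots> < exp (real (L+1))" by simp
      finally have "real (card G) < exp (real (L+1))" using cG by linarith
      then have "real (card G) * exp (- real (L+1)) < exp (real (L+1)) * exp (- real (L+1))"
        by (intro mult_strict_right_mono) auto
      moreover have "exp (real (L+1)) * exp (- real (L+1)) = 1" by (simp only: exp_add[symmetric]) simp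
      ultimately show ?thesis by linarith
    qed
    finally show False by simp
  qed
  then obtain t where t: "t \<in> Ps" "\<forall>i\<in>G. t \<notin> Bad i" by blast
  show ?thesis
  proof (intro exI conjI allI impI)
    fix l assume "l < k" then show "t l < ncol" using t(1) by (auto simp: Ps_def PiE_def)
  next
    fix i assume "i < nrow" "0 \<le> mat_vec A ncol x i"
    then have "i \<in> G" by (simp add: G_def)
    then show "- real k \<le> real m * (\<Sum>l<k. A i (t l))" using t by (auto simp: Bad_def not_less)
  qed
qed



definition prog :: "nat \<Rightarrow> instr list" where
  "prog m = [IJmpLe 0 13 94,
    IConst 15 1,
    IConst 16 (int (4*m^2)),
    IConst 19 100,
    IConst 14 2,
    IConst 5 0,
    IJmpLe 0 5 10,
    IAdd 2 2 1,
    IAdd 5 5 15,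
    IJmpLe 13 13 6,
    IConst 7 8,
    IAdd 3 2 7,
    IConst 5 0,
    IJmpLe 2 5 19,
    RLoad 0 5,
    IAdd 6 3 5,
    RStore 6 0,
    IAdd 5 5 15,
    IJmpLe 13 13 13,
    IAdd 4 16 13,
    IConst 17 1,
    IAdd 21 0 15,
    IJmpLe 21 17 26,
    IAdd 17 17 17,
    IAdd 4 4 16,
    IJmpLe 13 13 22,
    IAdd 11 4 4,
    IAdd 11 11 19,
    ISub 18 13 4,
    RConst 2 (int m),
    OfInt 3 18,
    IConst 9 (-1),
    IAdd 20 3 2,
    IAdd 20 20 1,
    IConst 8 0,
    IConst 5 0,
    IAdd 12 3 13,
    IJmpLe 0 5 54,
    RConst 1 0,
    IAdd 10 19 13,
    IJmpLe 11 10 47,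
    ILoad 7 10,
    IAdd 6 12 7,
    RLoad 0 6,
    RAdd 1 1 0,
    IAdd 10 10 14,
    IJmpLe 13 13 40,
    RMul 4 2 1,
    RJmpLe 3 4 50,
    IJmpLe 13 13 51,
    IAdd 8 8 15,
    IAdd 5 5 15,
    IAdd 12 12 1,
    IJmpLe 13 13 37,
    IJmpLe 8 9 63,
    IAdd 9 8 13,
    IAdd 10 19 13,
    IJmpLe 11 10 63,
    ILoad 7 10,
    IAdd 6 10 15,
    IStore 6 7,
    IAdd 10 10 14,
    IJmpLe 13 13 57,
    IAdd 10 19 13,
    IJmpLe 11 10 73,
    ILoad 7 10,
    IAdd 7 7 15,
    IJmpLe 1 7 70,
    IStore 10 7,
    IJmpLe 13 13 34,
    IStore 10 13,
    IAdd 10 10 14,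
    IJmpLe 13 13 64,
    RConst 5 1,
    OfInt 6 4,
    RDiv 5 5 6,
    IAdd 10 19 13,
    IJmpLe 11 10 86,
    IAdd 6 10 15,
    ILoad 7 6,
    IAdd 6 20 7,
    RLoad 0 6,
    RAdd 0 0 5,
    RStore 6 0,
    IAdd 10 10 14,
    IJmpLe 13 13 77,
    IAdd 5 1 13,
    IJmpLe 5 13 93,
    ISub 5 5 15,
    IAdd 6 20 5,
    RLoad 0 6,
    RStore 5 0,
    IJmpLe 13 13 87,
    Halt,
    RConst 0 1,
    Halt]"

lemma prog_len[simp]: "length (prog m) = 96" by (simp add: prog_def)

lemma prog_fetch[simp]:
  "prog m ! 0 = IJmpLe 0 13 94"
  "prog m ! 1 = IConst 15 1"
  "prog m ! 2 = IConst 16 (int (4*m^2))"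
  "prog m ! 3 = IConst 19 100"
  "prog m ! 4 = IConst 14 2"
  "prog m ! 5 = IConst 5 0"
  "prog m ! 6 = IJmpLe 0 5 10"
  "prog m ! 7 = IAdd 2 2 1"
  "prog m ! 8 = IAdd 5 5 15"
  "prog m ! 9 = IJmpLe 13 13 6"
  "prog m ! 10 = IConst 7 8"
  "prog m ! 11 = IAdd 3 2 7"
  "prog m ! 12 = IConst 5 0"
  "prog m ! 13 = IJmpLe 2 5 19"
  "prog m ! 14 = RLoad 0 5"
  "prog m ! 15 = IAdd 6 3 5"
  "prog m ! 16 = RStore 6 0"
  "prog m ! 17 = IAdd 5 5 15"
  "prog m ! 18 = IJmpLe 13 13 13"
  "prog m ! 19 = IAdd 4 16 13"
  "prog m ! 20 = IConst 17 1"
  "prog m ! 21 = IAdd 21 0 15"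
  "prog m ! 22 = IJmpLe 21 17 26"
  "prog m ! 23 = IAdd 17 17 17"
  "prog m ! 24 = IAdd 4 4 16"
  "prog m ! 25 = IJmpLe 13 13 22"
  "prog m ! 26 = IAdd 11 4 4"
  "prog m ! 27 = IAdd 11 11 19"
  "prog m ! 28 = ISub 18 13 4"
  "prog m ! 29 = RConst 2 (int m)"
  "prog m ! 30 = OfInt 3 18"
  "prog m ! 31 = IConst 9 (-1)"
  "prog m ! 32 = IAdd 20 3 2"
  "prog m ! 33 = IAdd 20 20 1"
  "prog m ! 34 = IConst 8 0"
  "prog m ! 35 = IConst 5 0"
  "prog m ! 36 = IAdd 12 3 13"
  "prog m ! 37 = IJmpLe 0 5 54"
  "prog m ! 38 = RConst 1 0"
  "prog m ! 39 = IAdd 10 19 13"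
  "prog m ! 40 = IJmpLe 11 10 47"
  "prog m ! 41 = ILoad 7 10"
  "prog m ! 42 = IAdd 6 12 7"
  "prog m ! 43 = RLoad 0 6"
  "prog m ! 44 = RAdd 1 1 0"
  "prog m ! 45 = IAdd 10 10 14"
  "prog m ! 46 = IJmpLe 13 13 40"
  "prog m ! 47 = RMul 4 2 1"
  "prog m ! 48 = RJmpLe 3 4 50"
  "prog m ! 49 = IJmpLe 13 13 51"
  "prog m ! 50 = IAdd 8 8 15"
  "prog m ! 51 = IAdd 5 5 15"
  "prog m ! 52 = IAdd 12 12 1"
  "prog m ! 53 = IJmpLe 13 13 37"
  "prog m ! 54 = IJmpLe 8 9 63"
  "prog m ! 55 = IAdd 9 8 13"
  "prog m ! 56 = IAdd 10 19 13"
  "prog m ! 57 = IJmpLe 11 10 63"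
  "prog m ! 58 = ILoad 7 10"
  "prog m ! 59 = IAdd 6 10 15"
  "prog m ! 60 = IStore 6 7"
  "prog m ! 61 = IAdd 10 10 14"
  "prog m ! 62 = IJmpLe 13 13 57"
  "prog m ! 63 = IAdd 10 19 13"
  "prog m ! 64 = IJmpLe 11 10 73"
  "prog m ! 65 = ILoad 7 10"
  "prog m ! 66 = IAdd 7 7 15"
  "prog m ! 67 = IJmpLe 1 7 70"
  "prog m ! 68 = IStore 10 7"
  "prog m ! 69 = IJmpLe 13 13 34"
  "prog m ! 70 = IStore 10 13"
  "prog m ! 71 = IAdd 10 10 14"
  "prog m ! 72 = IJmpLe 13 13 64"
  "prog m ! 73 = RConst 5 1"
  "prog m ! 74 = OfInt 6 4"
  "prog m ! 75 = RDiv 5 5 6"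
  "prog m ! 76 = IAdd 10 19 13"
  "prog m ! 77 = IJmpLe 11 10 86"
  "prog m ! 78 = IAdd 6 10 15"
  "prog m ! 79 = ILoad 7 6"
  "prog m ! 80 = IAdd 6 20 7"
  "prog m ! 81 = RLoad 0 6"
  "prog m ! 82 = RAdd 0 0 5"
  "prog m ! 83 = RStore 6 0"
  "prog m ! 84 = IAdd 10 10 14"
  "prog m ! 85 = IJmpLe 13 13 77"
  "prog m ! 86 = IAdd 5 1 13"
  "prog m ! 87 = IJmpLe 5 13 93"
  "prog m ! 88 = ISub 5 5 15"
  "prog m ! 89 = IAdd 6 20 5"
  "prog m ! 90 = RLoad 0 6"
  "prog m ! 91 = RStore 5 0"
  "prog m ! 92 = IJmpLe 13 13 87"
  "prog m ! 93 = Halt"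
  "prog m ! 94 = RConst 0 1"
  "prog m ! 95 = Halt"
  by (simp_all add: prog_def)


definition wp :: "instr list \<Rightarrow> state \<Rightarrow> (state \<Rightarrow> bool) \<Rightarrow> nat \<Rightarrow> bool" where
  "wp P s Q T \<longleftrightarrow> (\<exists>t\<le>T. Q (run P t s))"

lemma run_0[simp]: "run P 0 s = s" by (simp add: run_def)
lemma run_Suc: "run P (Suc n) s = run P n (step P s)" unfolding run_def funpow_Suc_right by simp
lemma run_add: "run P (a + b) s = run P b (run P a s)"
  unfolding run_def by (metis add.commute funpow_add comp_apply)
lemma run_numeral[simp]: "run P (numeral k) s = run P (pred_numeral k) (step P s)"
  by (simp add: numeral_eq_Suc run_Suc)

lemma run_one[simp]: "run P 1 s = step P s" by (simp add: run_def)
lemma run_Suc0[simp]: "run P (Suc 0) s = step P s" by (simp add: run_def)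
lemma suc2[simp]: "Suc (Suc 0) = 2" by simp
lemma fetch1[simp]: "prog m ! Suc 0 = IConst 15 1" by (simp add: prog_def)

lemma wp_seq:
  assumes "wp P s Q1 T1" and "\<And>s'. Q1 s' \<Longrightarrow> wp P s' Q2 T2"
  shows "wp P s Q2 (T1 + T2)"
proof -
  from assms(1) obtain t1 where t1: "t1 \<le> T1" "Q1 (run P t1 s)" by (auto simp: wp_def)
  from assms(2)[OF t1(2)] obtain t2 where t2: "t2 \<le> T2" "Q2 (run P t2 (run P t1 s))" by (auto simp: wp_def)
  show ?thesis unfolding wp_def using t1 t2 by (intro exI[of _ "t1+t2"]) (auto simp: run_add)
qed

lemma wp_run: "Q (run P n s) \<Longrightarrow> n \<le> T \<Longrightarrow> wp P s Q T"
  by (auto simp: wp_def)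

lemma wp_mono: "wp P s Q T \<Longrightarrow> T \<le> T' \<Longrightarrow> (\<And>s. Q s \<Longrightarrow> Q' s) \<Longrightarrow> wp P s Q' T'"
  unfolding wp_def by (meson le_trans)

lemma wp_loop:
  assumes step: "\<And>n s. Inv (Suc n) s \<Longrightarrow> wp P s (Inv n) c"
    and ex: "\<And>s. Inv 0 s \<Longrightarrow> wp P s Q d"
  shows "Inv n s \<Longrightarrow> wp P s Q (n * c + d)"
proof (induction n arbitrary: s)
  case 0 then show ?case using ex by simp
next
  case (Suc n)
  have "wp P s Q (c + (n * c + d))" by (rule wp_seq[OF step[OF Suc.prems] Suc.IH])
  then show ?case by (simp add: add.assoc)
qed

lemma step_prog[simp]: "pc < 96 \<Longrightarrow> step (prog m) (pc, I, R) = exec (prog m ! pc) (pc, I, R)"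
  by (simp add: step_def halted_def)

definition agr :: "nat set \<Rightarrow> (nat \<Rightarrow> 'a) \<Rightarrow> (nat \<Rightarrow> 'a) \<Rightarrow> bool" where
  "agr S f g \<longleftrightarrow> (\<forall>a. a \<notin> S \<longrightarrow> f a = g a)"

lemma nat_int_add[simp]: "nat (int a + int b) = a + b" by (simp add: nat_add_distrib)
lemma nat_int_add_num[simp]: "nat (int a + numeral b) = a + numeral b" by (simp add: nat_add_distrib)

locale ctx =
  fixes m :: nat and nrow ncol :: nat and A :: "nat \<Rightarrow> nat \<Rightarrow> real"
  assumes m1: "m \<ge> 1" and ncol1: "ncol \<ge> 1"
begin

abbreviation "P \<equiv> prog m"
definition "N = nrow * ncol"
definition "L = (LEAST l. nrow < 2^l)"
definition "k = 4*m^2*(L+1)"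
definition "E = 100 + 2*k"
definition "H = 2*N + 8 + ncol"

lemma L_gt: "nrow < 2^L"
  unfolding L_def by (rule LeastI[of _ nrow]) (rule less_exp)

lemma L_min: "j < L \<Longrightarrow> 2^j \<le> nrow"
  unfolding L_def using not_less_Least by (metis not_le)

definition "ctxI I \<longleftrightarrow> I 0 = int nrow \<and> I 1 = int ncol \<and> I 3 = int N + 8 \<and> I 4 = int k \<and> I 11 = int E
   \<and> I 13 = 0 \<and> I 14 = 2 \<and> I 15 = 1 \<and> I 19 = 100 \<and> I 18 = - int k \<and> I 20 = int H"
definition "ctxR R \<longleftrightarrow> R 2 = real m \<and> R 3 = - real k \<and> (\<forall>i<nrow. \<forall>j<ncol. R (N+8+i*ncol+j) = A i j)
   \<and> (\<forall>j<ncol. R (H+j) = 0)"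
definition "cur I s \<longleftrightarrow> (\<forall>l<k. I (100 + 2*l) = int (s l))"
definition "bst I s \<longleftrightarrow> (\<forall>l<k. I (101 + 2*l) = int (s l))"
definition "digs s \<longleftrightarrow> (\<forall>l<k. s l < ncol)"
definition "SS s i = (\<Sum>l<k. A i (s l))"
definition "cnt s = card {i. i < nrow \<and> - real k \<le> real m * SS s i}"

lemma k_pos: "k \<ge> 1" using m1 unfolding k_def by (simp add: Suc_le_eq)


lemma ph1:
  assumes I0: "I 0 = int nrow" "I 1 = int ncol" "I 13 = 0" "I 2 = 0" and nr: "nrow \<ge> 1"
  shows "wp P (0, I, R) (\<lambda>(pc, I', R'). pc = 12 \<and> I' 2 = int N \<and> I' 3 = int N + 8 \<and> I' 14 = 2 \<and> I' 15 = 1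
     \<and> I' 16 = int (4*m^2) \<and> I' 19 = 100 \<and> agr {2,3,5,7,14,15,16,19} I' I \<and> R' = R) (6 + (nrow * 4 + 3))"
proof -
  define I1 where "I1 = I(15 := 1, 16 := int (4*m^2), 19 := 100, 14 := 2, 5 := 0)"
  have s1: "wp P (0, I, R) (\<lambda>s. s = (6::nat, I1, R)) 6"
    by (rule wp_run[where n=6]) (use nr I0 in \<open>simp_all add: I1_def\<close>)
  define Inv where "Inv n s \<longleftrightarrow> (\<exists>I' i. s = (6::nat, I', R) \<and> i + n = nrow \<and> I' 5 = int i
      \<and> I' 2 = int (i * ncol) \<and> agr {2,5} I' I1)" for n s
  have lp: "wp P s (\<lambda>(pc, I', R'). pc = 12 \<and> I' 2 = int N \<and> I' 3 = int N + 8 \<and> I' 14 = 2 \<and> I' 15 = 1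
     \<and> I' 16 = int (4*m^2) \<and> I' 19 = 100 \<and> agr {2,3,5,7,14,15,16,19} I' I \<and> R' = R) (nrow * 4 + 3)"
    if "Inv nrow s" for s
  proof (rule wp_loop[where Inv=Inv and c=4 and d=3])
    fix n s assume "Inv (Suc n) s"
    then obtain I' i where st: "s = (6, I', R)" "i + Suc n = nrow" "I' 5 = int i"
      "I' 2 = int (i * ncol)" "agr {2,5} I' I1" unfolding Inv_def by blast
    have f: "I' 0 = int nrow" "I' 1 = int ncol" "I' 15 = 1" "I' 13 = 0"
      using st(5) I0 unfolding agr_def I1_def by auto
    show "wp P s (Inv n) 4"
    proof (rule wp_run[where n=4])
      show "Inv n (run P 4 s)" using st f
        by (simp add: Inv_def agr_def algebra_simps) (rule exI[of _ "Suc i"], auto simp: algebra_simps)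
    qed simp
  next
    fix s assume "Inv 0 s"
    then obtain I' where st: "s = (6, I', R)" "I' 5 = int nrow"
      "I' 2 = int (nrow * ncol)" "agr {2,5} I' I1" unfolding Inv_def by auto
    have f: "I' 0 = int nrow" "I' 1 = int ncol" "I' 15 = 1" "I' 13 = 0" "I' 14 = 2" "I' 16 = int (4*m^2)" "I' 19 = 100"
      using st(4) I0 unfolding agr_def I1_def by auto
    show "wp P s (\<lambda>(pc, I', R'). pc = 12 \<and> I' 2 = int N \<and> I' 3 = int N + 8 \<and> I' 14 = 2 \<and> I' 15 = 1
     \<and> I' 16 = int (4*m^2) \<and> I' 19 = 100 \<and> agr {2,3,5,7,14,15,16,19} I' I \<and> R' = R) 3"
    proof (rule wp_run[where n=3])
      show "(\<lambda>(pc, I'', R'). pc = 12 \<and> I'' 2 = int N \<and> I'' 3 = int N + 8 \<and> I'' 14 = 2 \<and> I'' 15 = 1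
         \<and> I'' 16 = int (4*m^2) \<and> I'' 19 = 100 \<and> agr {2,3,5,7,14,15,16,19} I'' I \<and> R' = R) (run P 3 s)"
        using st f by (simp add: agr_def I1_def N_def)
    qed simp
  qed (rule that)
  show ?thesis
    by (rule wp_seq[OF s1]) (rule lp, use I0 in \<open>simp add: Inv_def agr_def I1_def\<close>)
qed

lemma ph2:
  assumes I0: "I 2 = int N" "I 3 = int N + 8" "I 15 = 1" "I 13 = 0"
  shows "wp P (12, I, R) (\<lambda>(pc, I', R'). pc = 19 \<and> agr {5,6} I' I \<and> (\<forall>a<N. R' (N+8+a) = R a)
      \<and> (\<forall>a. 2*N+8 \<le> a \<longrightarrow> R' a = R a)) (1 + (N * 6 + 1))"
proof -
  have s1: "wp P (12, I, R) (\<lambda>s. s = (13::nat, I(5:=0), R)) 1"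
    by (rule wp_run[where n=1]) simp_all
  define Inv where "Inv n s \<longleftrightarrow> (\<exists>I' R' a0. s = (13::nat, I', R') \<and> a0 + n = N \<and> I' 5 = int a0
      \<and> agr {5,6} I' I \<and> (\<forall>a. a0 \<le> a \<and> a < N \<longrightarrow> R' a = R a) \<and> (\<forall>a<a0. R' (N+8+a) = R a)
      \<and> (\<forall>a. 2*N+8 \<le> a \<longrightarrow> R' a = R a))" for n s
  have lp: "wp P s (\<lambda>(pc, I', R'). pc = 19 \<and> agr {5,6} I' I \<and> (\<forall>a<N. R' (N+8+a) = R a)
      \<and> (\<forall>a. 2*N+8 \<le> a \<longrightarrow> R' a = R a)) (N * 6 + 1)"
    if "Inv N s" for s
  proof (rule wp_loop[where Inv=Inv and c=6 and d=1])
    fix n s assume "Inv (Suc n) s"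
    then obtain I' R' a0 where st: "s = (13, I', R')" "a0 + Suc n = N" "I' 5 = int a0"
      "agr {5,6} I' I" "\<forall>a. a0 \<le> a \<and> a < N \<longrightarrow> R' a = R a" "\<forall>a<a0. R' (N+8+a) = R a"
      "\<forall>a. 2*N+8 \<le> a \<longrightarrow> R' a = R a" unfolding Inv_def by blast
    have f: "I' 2 = int N" "I' 3 = int N + 8" "I' 15 = 1" "I' 13 = 0"
      using st(4) I0 unfolding agr_def by auto
    show "wp P s (Inv n) 6"
    proof (rule wp_run[where n=6])
      show "Inv n (run P 6 s)" using st f
        by (simp add: Inv_def nat_add_distrib) (rule exI[of _ "Suc a0"], auto simp: agr_def less_Suc_eq)
    qed simp
  next
    fix s assume "Inv 0 s"
    then obtain I' R' where st: "s = (13, I', R')" "I' 5 = int N"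
      "agr {5,6} I' I" "\<forall>a<N. R' (N+8+a) = R a"
      "\<forall>a. 2*N+8 \<le> a \<longrightarrow> R' a = R a" unfolding Inv_def by auto
    have f: "I' 2 = int N" using st(3) I0 unfolding agr_def by auto
    show "wp P s (\<lambda>(pc, I', R'). pc = 19 \<and> agr {5,6} I' I \<and> (\<forall>a<N. R' (N+8+a) = R a)
      \<and> (\<forall>a. 2*N+8 \<le> a \<longrightarrow> R' a = R a)) 1"
      by (rule wp_run[where n=1]) (use st f in simp_all)
  qed (rule that)
  show ?thesis
    by (rule wp_seq[OF s1]) (rule lp, simp add: Inv_def agr_def)
qed

lemma ph3:
  assumes I0: "I 0 = int nrow" "I 1 = int ncol" "I 13 = 0" "I 15 = 1" "I 16 = int (4*m^2)" "I 19 = 100"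
     "I 2 = int N" "I 3 = int N + 8"
  shows "wp P (19, I, R) (\<lambda>(pc, I', R'). pc = 34 \<and> I' 4 = int k \<and> I' 11 = int E \<and> I' 18 = - int k
     \<and> I' 9 = -1 \<and> I' 20 = int H \<and> R' 2 = real m \<and> R' 3 = - real k
     \<and> agr {4,9,11,17,18,20,21} I' I \<and> agr {2,3} R' R) (3 + (L * 4 + 9))"
proof -
  define I2 where "I2 = I(4 := int (4*m^2), 17 := 1, 21 := int nrow + 1)"
  have s1: "wp P (19, I, R) (\<lambda>s. s = (22::nat, I2, R)) 3"
    by (rule wp_run[where n=3]) (simp_all add: I2_def I0)
  define Inv where "Inv n s \<longleftrightarrow> (\<exists>I' j. s = (22::nat, I', R) \<and> j + n = L \<and> I' 17 = 2^j
      \<and> I' 4 = int (4*m^2*(j+1)) \<and> agr {4,17} I' I2)" for n s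
  have lp: "wp P s (\<lambda>(pc, I', R'). pc = 34 \<and> I' 4 = int k \<and> I' 11 = int E \<and> I' 18 = - int k
     \<and> I' 9 = -1 \<and> I' 20 = int H \<and> R' 2 = real m \<and> R' 3 = - real k
     \<and> agr {4,9,11,17,18,20,21} I' I \<and> agr {2,3} R' R) (L * 4 + 9)"
    if "Inv L s" for s
  proof (rule wp_loop[where Inv=Inv and c=4 and d=9])
    fix n s assume "Inv (Suc n) s"
    then obtain I' j where st: "s = (22, I', R)" "j + Suc n = L" "I' 17 = 2^j"
      "I' 4 = int (4*m^2*(j+1))" "agr {4,17} I' I2" unfolding Inv_def by blast
    have f: "I' 21 = int nrow + 1" "I' 16 = int (4*m^2)" "I' 13 = 0"
      using st(5) I0 unfolding agr_def I2_def by auto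
    have "2^j \<le> nrow" using L_min st(2) by simp
    then have h: "\<not> (int nrow + 1 \<le> 2^j)" by (metis (mono_tags) add1_zle_eq not_less of_nat_le_iff of_nat_numeral of_nat_power)
    show "wp P s (Inv n) 4"
    proof (rule wp_run[where n=4])
      show "Inv n (run P 4 s)" using st f h
        by (simp add: Inv_def) (rule exI[of _ "Suc j"], auto simp: agr_def algebra_simps)
    qed simp
  next
    fix s assume "Inv 0 s"
    then obtain I' where st: "s = (22, I', R)" "I' 17 = 2^L"
      "I' 4 = int k" "agr {4,17} I' I2" unfolding Inv_def k_def by auto
    have f: "I' 21 = int nrow + 1" "I' 16 = int (4*m^2)" "I' 13 = 0" "I' 19 = 100" "I' 2 = int N" "I' 3 = int N + 8" "I' 1 = int ncol"
      using st(4) I0 unfolding agr_def I2_def by auto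
    have h: "int nrow + 1 \<le> 2^L" using L_gt by (metis (mono_tags) add1_zle_eq of_nat_less_iff of_nat_numeral of_nat_power)
    show "wp P s (\<lambda>(pc, I', R'). pc = 34 \<and> I' 4 = int k \<and> I' 11 = int E \<and> I' 18 = - int k
     \<and> I' 9 = -1 \<and> I' 20 = int H \<and> R' 2 = real m \<and> R' 3 = - real k
     \<and> agr {4,9,11,17,18,20,21} I' I \<and> agr {2,3} R' R) 9"
      by (rule wp_run[where n=9]) (use st f h in \<open>simp_all add: E_def H_def agr_def I2_def\<close>)
  qed (rule that)
  show ?thesis
    by (rule wp_seq[OF s1]) (rule lp, simp add: Inv_def agr_def I2_def)
qed

end



definition vl :: "nat \<Rightarrow> nat \<Rightarrow> (nat \<Rightarrow> nat) \<Rightarrow> nat" where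
  "vl n K s = (\<Sum>l<K. s l * n^l)"

lemma geo: "n \<ge> 1 \<Longrightarrow> (\<Sum>l<j. (n - 1) * n^l) + 1 = (n::nat)^j"
proof (induction j)
  case (Suc j)
  have "(\<Sum>l<Suc j. (n - 1) * n^l) + 1 = ((\<Sum>l<j. (n - 1) * n^l) + 1) + (n - 1) * n^j" by simp
  also have "\<dots> = n^j + (n - 1) * n^j" using Suc by simp
  also have "\<dots> = n * n^j" using Suc.prems by (cases n) auto
  finally show ?case by simp
qed simp

lemma vl_max: "n \<ge> 1 \<Longrightarrow> \<forall>l<K. s l = n - 1 \<Longrightarrow> vl n K s + 1 = n^K"
  unfolding vl_def using geo[of n K] by (metis (no_types, lifting) lessThan_iff mult.commute sum.cong)

lemma vl_inc:
  assumes n: "n \<ge> 1" and l0: "l0 < K" and lo: "\<forall>l<l0. s l = n - 1"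
  shows "vl n K (\<lambda>l. if l < l0 then 0 else if l = l0 then s l0 + 1 else s l) = vl n K s + 1"
  using l0
proof (induction K)
  case 0 then show ?case by simp
next
  case (Suc K)
  show ?case
  proof (cases "l0 < K")
    case True
    then show ?thesis using Suc.IH by (simp add: vl_def)
  next
    case False
    then have K: "K = l0" using Suc.prems by simp
    have a: "(\<Sum>l<l0. (if l < l0 then 0 else if l = l0 then s l0 + 1 else s l) * n^l) = 0" by simp
    have b: "(\<Sum>l<l0. s l * n^l) + 1 = n^l0"
      using geo[OF n, of l0] lo by (metis (no_types, lifting) lessThan_iff mult.commute sum.cong)
    show ?thesis unfolding vl_def K using a b by (simp add: algebra_simps)
  qed
qed

lemma vl_lt: "\<forall>l<K. s l < n \<Longrightarrow> vl n K s < n^K"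
proof (induction K)
  case 0 then show ?case by (simp add: vl_def)
next
  case (Suc K)
  have "vl n (Suc K) s = vl n K s + s K * n^K" by (simp add: vl_def)
  also have "\<dots> < n^K + s K * n^K" using Suc by simp
  also have "\<dots> = (s K + 1) * n^K" by simp
  also have "\<dots> \<le> n * n^K" using Suc.prems by (intro mult_right_mono) auto
  finally show ?case by simp
qed

lemma vl_inj: "\<forall>l<K. s l < n \<Longrightarrow> \<forall>l<K. t l < n \<Longrightarrow> vl n K s = vl n K t \<Longrightarrow> \<forall>l<K. s l = t l"
proof (induction K)
  case 0 then show ?case by simp
next
  case (Suc K)
  have hs: "vl n (Suc K) s = vl n K s + s K * n^K" and ht: "vl n (Suc K) t = vl n K t + t K * n^K"
    by (simp_all add: vl_def)
  have ls: "vl n K s < n^K" and lt: "vl n K t < n^K" using Suc.prems by (auto intro!: vl_lt)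
  have nz: "n^K \<noteq> 0" using ls by (metis less_nat_zero_code)
  have "vl n (Suc K) s div n^K = s K" "vl n (Suc K) s mod n^K = vl n K s"
    unfolding hs using ls nz by (auto simp: div_mult_self1)
  moreover have "vl n (Suc K) t div n^K = t K" "vl n (Suc K) t mod n^K = vl n K t"
    unfolding ht using lt nz by (auto simp: div_mult_self1)
  ultimately have e1: "s K = t K" and e2: "vl n K s = vl n K t" using Suc.prems(3) by simp_all
  have "\<forall>l<K. s l = t l" using Suc.IH Suc.prems(1,2) e2 by simp
  then show ?case using e1 less_Suc_eq by auto
qed

definition agl :: "nat set \<Rightarrow> (nat \<Rightarrow> int) \<Rightarrow> (nat \<Rightarrow> int) \<Rightarrow> bool" where
  "agl S f g \<longleftrightarrow> (\<forall>a<100. a \<notin> S \<longrightarrow> f a = g a)"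

lemma par1[simp]: "100 + 2*l \<noteq> 101 + 2*(l'::nat)" by presburger
lemma par2[simp]: "101 + 2*l \<noteq> 100 + 2*(l'::nat)" by presburger
lemma nat_int_add_one[simp]: "nat (int a + 1) = a + 1" by simp

context ctx
begin

lemma inner:
  assumes c: "ctxI I" "ctxR R" "cur I s" "digs s" "i < nrow" and
    st: "I 10 = 100" "I 12 = int (N+8+i*ncol)" "R 1 = 0"
  shows "wp P (40, I, R) (\<lambda>(pc,I',R'). pc = 47 \<and> agr {6,7,10} I' I \<and> agr {0,1} R' R \<and> R' 1 = SS s i) (k*7 + 1)"
proof -
  define Inv where "Inv n st \<longleftrightarrow> (\<exists>I' R' l0. st = (40::nat, I', R') \<and> l0 + n = k \<and> I' 10 = int (100 + 2*l0)
      \<and> R' 1 = (\<Sum>l<l0. A i (s l)) \<and> agr {6,7,10} I' I \<and> agr {0,1} R' R)" for n st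
  show ?thesis
  proof (rule wp_loop[where Inv=Inv and c=7 and d=1])
    fix n st assume "Inv (Suc n) st"
    then obtain I' R' l0 where h: "st = (40, I', R')" "l0 + Suc n = k" "I' 10 = int (100 + 2*l0)"
      "R' 1 = (\<Sum>l<l0. A i (s l))" "agr {6,7,10} I' I" "agr {0,1} R' R" unfolding Inv_def by blast
    have l0: "l0 < k" using h(2) by simp
    have dl: "s l0 < ncol" using c(4) l0 by (simp add: digs_def)
    have f: "I' 11 = int (100 + 2*k)" "I' 12 = int (N+8+i*ncol)" "I' 13 = 0" "I' 14 = 2"
      "I' (100 + 2*l0) = int (s l0)" "R' (N+8+i*ncol + s l0) = A i (s l0)"
      using h(5,6) c st l0 dl by (auto simp: agr_def ctxI_def ctxR_def cur_def E_def)
    show "wp P st (Inv n) 7"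
    proof (rule wp_run[where n=7])
      show "Inv n (run P 7 st)" using h f l0
        apply (simp add: Inv_def del: of_nat_add of_nat_mult)
        apply (rule exI[of _ "Suc l0"])
        apply (auto simp: agr_def)
        done
    qed simp
  next
    fix st assume "Inv 0 st"
    then obtain I' R' where h: "st = (40, I', R')" "I' 10 = int (100 + 2*k)"
      "R' 1 = SS s i" "agr {6,7,10} I' I" "agr {0,1} R' R" unfolding Inv_def SS_def by auto
    have f: "I' 11 = int (100 + 2*k)"
      using h c by (auto simp: agr_def ctxI_def E_def)
    show "wp P st (\<lambda>(pc,I',R'). pc = 47 \<and> agr {6,7,10} I' I \<and> agr {0,1} R' R \<and> R' 1 = SS s i) 1"
      by (rule wp_run[where n=1]) (use h f in simp_all)
  next
    show "Inv k (40, I, R)" unfolding Inv_def using st by (auto simp: agr_def)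
  qed
qed

lemma tup: "(case st of (pc, I, R) \<Rightarrow> Q pc I R) \<Longrightarrow> \<exists>pc I R. st = (pc, I, R) \<and> Q pc I R"
  by (cases st) auto

lemma card_Suc_filter: "card {i. i < Suc n \<and> p i} = card {i. i < n \<and> p i} + (if p n then 1 else 0)"
proof (cases "p n")
  case True
  then have "{i. i < Suc n \<and> p i} = insert n {i. i < n \<and> p i}" by (auto simp: less_Suc_eq)
  then show ?thesis using True by simp
next
  case False
  then have "{i. i < Suc n \<and> p i} = {i. i < n \<and> p i}" by (auto simp: less_Suc_eq)
  then show ?thesis using False by simp
qed

lemma rows:
  assumes c: "ctxI I" "ctxR R" "cur I s" "digs s"
  shows "wp P (34, I, R) (\<lambda>(pc,I',R'). pc = 54 \<and> I' 8 = int (cnt s) \<and> agr {5,6,7,8,10,12} I' I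
     \<and> agr {0,1,4} R' R) (3 + (nrow * (k*7+10) + 1))"
proof -
  define cond where "cond i \<longleftrightarrow> - real k \<le> real m * SS s i" for i
  have s1: "wp P (34, I, R) (\<lambda>st. st = (37::nat, I(8 := 0, 5 := 0, 12 := int (N + 8)), R)) 3"
    by (rule wp_run[where n=3]) (use c in \<open>simp_all add: ctxI_def\<close>)
  define Inv where "Inv n st \<longleftrightarrow> (\<exists>I' R' i0. st = (37::nat, I', R') \<and> i0 + n = nrow \<and> I' 5 = int i0
      \<and> I' 12 = int (N+8+i0*ncol) \<and> I' 8 = int (card {i. i < i0 \<and> cond i})
      \<and> agr {5,6,7,8,10,12} I' I \<and> agr {0,1,4} R' R)" for n st
  have lp: "wp P st (\<lambda>(pc,I',R'). pc = 54 \<and> I' 8 = int (cnt s) \<and> agr {5,6,7,8,10,12} I' I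
     \<and> agr {0,1,4} R' R) (nrow * (k*7+10) + 1)" if "Inv nrow st" for st
  proof (rule wp_loop[where Inv=Inv and c="k*7+10" and d=1])
    fix n st assume "Inv (Suc n) st"
    then obtain I' R' i0 where h: "st = (37, I', R')" "i0 + Suc n = nrow" "I' 5 = int i0"
      "I' 12 = int (N+8+i0*ncol)" "I' 8 = int (card {i. i < i0 \<and> cond i})"
      "agr {5,6,7,8,10,12} I' I" "agr {0,1,4} R' R" unfolding Inv_def by blast
    have i0: "i0 < nrow" using h(2) by simp
    have f: "I' 0 = int nrow" "I' 19 = 100" "I' 13 = 0"
      using h(6) c(1) by (auto simp: agr_def ctxI_def)
    define I1 where "I1 = I'(10 := 100)"
    define R1 where "R1 = R'(1 := 0)"
    have s2: "wp P st (\<lambda>x. x = (40::nat, I1, R1)) 3"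
      by (rule wp_run[where n=3]) (use h f i0 in \<open>simp_all add: I1_def R1_def\<close>)
    have c1: "ctxI I1" "ctxR R1" "cur I1 s"
      using c h(6,7) unfolding I1_def R1_def ctxI_def ctxR_def cur_def agr_def
      by (auto simp: H_def)
    have s3: "wp P (40, I1, R1) (\<lambda>(pc,I'',R''). pc = 47 \<and> agr {6,7,10} I'' I1 \<and> agr {0,1} R'' R1 \<and> R'' 1 = SS s i0) (k*7 + 1)"
      by (rule inner[OF c1 c(4) i0]) (use h in \<open>simp_all add: I1_def R1_def\<close>)
    have s4: "wp P st' (Inv n) 6" if A: "(\<lambda>(pc,I'',R''). pc = 47 \<and> agr {6,7,10} I'' I1 \<and> agr {0,1} R'' R1 \<and> R'' 1 = SS s i0) st'" for st'
    proof -
      obtain I'' R'' where g: "st' = (47, I'', R'')" "agr {6,7,10} I'' I1" "agr {0,1} R'' R1" "R'' 1 = SS s i0"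
        using tup[OF A] by auto
      have f2: "R'' 2 = real m" "R'' 3 = - real k" "I'' 8 = int (card {i. i < i0 \<and> cond i})" "I'' 5 = int i0"
        "I'' 13 = 0" "I'' 15 = 1" "I'' 12 = int (N+8+i0*ncol)" "I'' 1 = int ncol"
        using g h c unfolding I1_def R1_def agr_def ctxI_def ctxR_def by auto
      show ?thesis
      proof (rule wp_run[where n=6])
        show "Inv n (run P 6 st')"
        proof (cases "cond i0")
          case True
          then have cc: "- real k \<le> real m * SS s i0" by (simp add: cond_def)
          show ?thesis using g f2 cc True
            apply (simp add: Inv_def del: of_nat_add of_nat_mult)
            apply (rule exI[of _ "Suc i0"])
            using h(2,6,7) by (auto simp: agr_def I1_def R1_def card_Suc_filter)
        next
          case False
          then have cc: "\<not> - real k \<le> real m * SS s i0" by (simp add: cond_def)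
          show ?thesis using g f2 cc False
            apply (simp add: Inv_def del: of_nat_add of_nat_mult)
            apply (rule exI[of _ "Suc i0"])
            using h(2,6,7) by (auto simp: agr_def I1_def R1_def card_Suc_filter)
        qed
      qed simp
    qed
    have a: "wp P st (\<lambda>(pc,I'',R''). pc = 47 \<and> agr {6,7,10} I'' I1 \<and> agr {0,1} R'' R1 \<and> R'' 1 = SS s i0) (3 + (k*7+1))"
      by (rule wp_seq[OF s2]) (use s3 in simp)
    have "wp P st (Inv n) (3 + (k*7+1) + 6)"
      by (rule wp_seq[OF a s4])
    then show "wp P st (Inv n) (k*7+10)" by (rule wp_mono) auto
  next
    fix st assume "Inv 0 st"
    then obtain I' R' where h: "st = (37, I', R')" "I' 5 = int nrow"
      "I' 8 = int (cnt s)" "agr {5,6,7,8,10,12} I' I" "agr {0,1,4} R' R"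
      unfolding Inv_def cnt_def cond_def by auto
    have f: "I' 0 = int nrow" using h(4) c(1) by (auto simp: agr_def ctxI_def)
    show "wp P st (\<lambda>(pc,I',R'). pc = 54 \<and> I' 8 = int (cnt s) \<and> agr {5,6,7,8,10,12} I' I
     \<and> agr {0,1,4} R' R) 1"
      by (rule wp_run[where n=1]) (use h f in simp_all)
  qed (rule that)
  show ?thesis
  proof (rule wp_seq[OF s1])
    fix st assume "st = (37::nat, I(8 := 0, 5 := 0, 12 := int (N + 8)), R)"
    moreover have "Inv nrow (37::nat, I(8 := 0, 5 := 0, 12 := int (N + 8)), R)"
      unfolding Inv_def
      apply (rule exI[where x="I(8 := 0, 5 := 0, 12 := int (N + 8))"], rule exI[where x=R], rule exI[where x=0])
      by (simp add: agr_def)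
    ultimately show "wp P st (\<lambda>(pc,I',R'). pc = 54 \<and> I' 8 = int (cnt s) \<and> agr {5,6,7,8,10,12} I' I
     \<and> agr {0,1,4} R' R) (nrow * (k*7+10) + 1)" using lp by simp
  qed
qed

lemma best:
  assumes c: "ctxI I" "cur I s" "I 8 = int c"
  shows "wp P (54, I, R) (\<lambda>(pc,I',R'). pc = 63 \<and> cur I' s \<and> agl {6,7,9,10} I' I \<and> R' = R \<and>
   ((int c \<le> I 9 \<and> I' 9 = I 9 \<and> (\<forall>l<k. I' (101+2*l) = I (101+2*l))) \<or> (\<not> int c \<le> I 9 \<and> I' 9 = int c \<and> bst I' s))) (k*6 + 4)"
proof (cases "int c \<le> I 9")
  case True
  have "wp P (54, I, R) (\<lambda>(pc,I',R'). pc = 63 \<and> cur I' s \<and> agl {6,7,9,10} I' I \<and> R' = R \<and>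
   ((int c \<le> I 9 \<and> I' 9 = I 9 \<and> (\<forall>l<k. I' (101+2*l) = I (101+2*l))) \<or> (\<not> int c \<le> I 9 \<and> I' 9 = int c \<and> bst I' s))) 1"
    by (rule wp_run[where n=1]) (use c True in \<open>simp_all add: agl_def\<close>)
  then show ?thesis by (rule wp_mono) auto
next
  case False
  define I1 where "I1 = I(9 := int c, 10 := 100)"
  have s1: "wp P (54, I, R) (\<lambda>st. st = (57::nat, I1, R)) 3"
    by (rule wp_run[where n=3]) (use c False in \<open>simp_all add: ctxI_def I1_def\<close>)
  define Inv where "Inv n st \<longleftrightarrow> (\<exists>I' l0. st = (57::nat, I', R) \<and> l0 + n = k \<and> I' 10 = int (100+2*l0)
    \<and> (\<forall>l<l0. I' (101+2*l) = int (s l)) \<and> cur I' s \<and> agl {6,7,10} I' I1 \<and> I' 9 = int c)" for n st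
  have lp: "wp P st (\<lambda>(pc,I',R'). pc = 63 \<and> cur I' s \<and> agl {6,7,9,10} I' I \<and> R' = R \<and>
   ((int c \<le> I 9 \<and> I' 9 = I 9 \<and> (\<forall>l<k. I' (101+2*l) = I (101+2*l))) \<or> (\<not> int c \<le> I 9 \<and> I' 9 = int c \<and> bst I' s))) (k*6 + 1)"
    if "Inv k st" for st
  proof (rule wp_loop[where Inv=Inv and c=6 and d=1])
    fix n st assume "Inv (Suc n) st"
    then obtain I' l0 where h: "st = (57, I', R)" "l0 + Suc n = k" "I' 10 = int (100+2*l0)"
      "\<forall>l<l0. I' (101+2*l) = int (s l)" "cur I' s" "agl {6,7,10} I' I1" "I' 9 = int c"
      unfolding Inv_def by blast
    have l0: "l0 < k" using h(2) by simp
    have f: "I' 11 = int (100+2*k)" "I' 15 = 1" "I' 14 = 2" "I' 13 = 0" "I' (100+2*l0) = int (s l0)"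
      using h(5,6) c(1) l0 unfolding agl_def ctxI_def I1_def cur_def E_def by auto
    show "wp P st (Inv n) 6"
    proof (rule wp_run[where n=6])
      show "Inv n (run P 6 st)" using h f l0
        apply (simp add: Inv_def del: of_nat_add of_nat_mult)
        apply (rule exI[of _ "Suc l0"])
        apply (auto simp: agl_def cur_def less_Suc_eq)
        done
    qed simp
  next
    fix st assume "Inv 0 st"
    then obtain I' where h: "st = (57, I', R)" "I' 10 = int (100+2*k)"
      "\<forall>l<k. I' (101+2*l) = int (s l)" "cur I' s" "agl {6,7,10} I' I1" "I' 9 = int c"
      unfolding Inv_def by auto
    have f: "I' 11 = int (100+2*k)"
      using h(5) c(1) unfolding agl_def ctxI_def I1_def E_def by auto
    show "wp P st (\<lambda>(pc,I',R'). pc = 63 \<and> cur I' s \<and> agl {6,7,9,10} I' I \<and> R' = R \<and>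
     ((int c \<le> I 9 \<and> I' 9 = I 9 \<and> (\<forall>l<k. I' (101+2*l) = I (101+2*l))) \<or> (\<not> int c \<le> I 9 \<and> I' 9 = int c \<and> bst I' s))) 1"
      by (rule wp_run[where n=1]) (use h f False in \<open>auto simp: agl_def bst_def I1_def\<close>)
  qed (rule that)
  have i: "Inv k (57, I1, R)"
    unfolding Inv_def
    by (rule exI[where x=I1], rule exI[where x=0]) (use c in \<open>simp add: I1_def agl_def cur_def\<close>)
  have "wp P (54, I, R) (\<lambda>(pc,I',R'). pc = 63 \<and> cur I' s \<and> agl {6,7,9,10} I' I \<and> R' = R \<and>
   ((int c \<le> I 9 \<and> I' 9 = I 9 \<and> (\<forall>l<k. I' (101+2*l) = I (101+2*l))) \<or> (\<not> int c \<le> I 9 \<and> I' 9 = int c \<and> bst I' s))) (3 + (k*6 + 1))"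
    by (rule wp_seq[OF s1]) (use lp i in simp)
  then show ?thesis by (rule wp_mono) auto
qed

lemma inc:
  assumes c: "ctxI I" "cur I s" "digs s"
  shows "wp P (63, I, R) (\<lambda>(pc,I',R'). R' = R \<and> agl {7,10} I' I \<and> (\<forall>l<k. I' (101+2*l) = I (101+2*l)) \<and>
     ((pc = 34 \<and> (\<exists>s'. cur I' s' \<and> digs s' \<and> vl ncol k s' = vl ncol k s + 1)) \<or> (pc = 73 \<and> vl ncol k s + 1 = ncol^k))) (1 + (k*7 + 1))"
proof -
  define Q where "Q = (\<lambda>(pc,I',R'). R' = R \<and> agl {7,10} I' I \<and> (\<forall>l<k. I' (101+2*l) = I (101+2*l)) \<and>
     ((pc = (34::nat) \<and> (\<exists>s'. cur I' s' \<and> digs s' \<and> vl ncol k s' = vl ncol k s + 1)) \<or> (pc = 73 \<and> vl ncol k s + 1 = ncol^k)))"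
  have s1: "wp P (63, I, R) (\<lambda>st. st = (64::nat, I(10 := 100), R)) 1"
    by (rule wp_run[where n=1]) (use c in \<open>simp_all add: ctxI_def\<close>)
  define D34 where "D34 st \<longleftrightarrow> (\<exists>I'. st = (34::nat, I', R) \<and> agl {7,10} I' I \<and> (\<forall>l<k. I' (101+2*l) = I (101+2*l))
     \<and> (\<exists>s'. cur I' s' \<and> digs s' \<and> vl ncol k s' = vl ncol k s + 1))" for st
  define Inv where "Inv n st \<longleftrightarrow> (\<exists>I' l0. st = (64::nat, I', R) \<and> l0 + n = k \<and> I' 10 = int (100+2*l0)
     \<and> (\<forall>l<l0. s l = ncol - 1) \<and> (\<forall>l<k. I' (100+2*l) = int (if l < l0 then 0 else s l))
     \<and> agl {7,10} I' I \<and> (\<forall>l<k. I' (101+2*l) = I (101+2*l))) \<or> D34 st" for n st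
  have lp: "wp P st Q (k*7 + 1)" if "Inv k st" for st
  proof (rule wp_loop[where Inv=Inv and c=7 and d=1])
    fix n st assume A: "Inv (Suc n) st"
    show "wp P st (Inv n) 7"
    proof (cases "D34 st")
      case True
      then show ?thesis by (intro wp_run[where n=0]) (auto simp: Inv_def)
    next
      case False
      then obtain I' l0 where h: "st = (64, I', R)" "l0 + Suc n = k" "I' 10 = int (100+2*l0)"
        "\<forall>l<l0. s l = ncol - 1" "\<forall>l<k. I' (100+2*l) = int (if l < l0 then 0 else s l)"
        "agl {7,10} I' I" "\<forall>l<k. I' (101+2*l) = I (101+2*l)"
        using A unfolding Inv_def by blast
      have l0: "l0 < k" using h(2) by simp
      have dl: "s l0 < ncol" using c(3) l0 by (simp add: digs_def)
      have f: "I' 11 = int (100+2*k)" "I' 15 = 1" "I' 14 = 2" "I' 13 = 0" "I' 1 = int ncol"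
        "I' (100+2*l0) = int (s l0)"
        using h(5,6) c(1) l0 unfolding agl_def ctxI_def E_def by auto
      show ?thesis
      proof (cases "ncol \<le> s l0 + 1")
        case True
        then have sl: "s l0 = ncol - 1" using dl by simp
        have ci: "int ncol \<le> int (s l0) + 1" using True by simp
        show ?thesis
        proof (rule wp_run[where n=7])
          show "Inv n (run P 7 st)" using h f l0 ci
            apply (simp add: Inv_def del: of_nat_add of_nat_mult)
            apply (rule disjI1)
            apply (rule exI[of _ "Suc l0"])
            using sl apply (auto simp: agl_def less_Suc_eq)
            done
        qed simp
      next
        case False
        have ci: "\<not> int ncol \<le> int (s l0) + 1" using False by simp
        define s' where "s' l = (if l < l0 then 0 else if l = l0 then s l0 + 1 else s l)" for l
        have v: "vl ncol k s' = vl ncol k s + 1"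
          unfolding s'_def using vl_inc[OF ncol1 l0 h(4)] by simp
        have ds: "digs s'" using c(3) False unfolding digs_def s'_def by auto
        show ?thesis
        proof (rule wp_run[where n=6])
          show "Inv n (run P 6 st)" using h f l0 ci
            apply (simp add: Inv_def D34_def del: of_nat_add of_nat_mult)
            apply (rule conjI)
             apply (auto simp: agl_def)[1]
            apply (rule exI[of _ s'])
            using v ds h(5) apply (auto simp: cur_def s'_def)
            done
        qed simp
      qed
    qed
  next
    fix st assume A: "Inv 0 st"
    show "wp P st Q 1"
    proof (cases "D34 st")
      case True
      then show ?thesis by (intro wp_run[where n=0]) (auto simp: Q_def D34_def)
    next
      case False
      then obtain I' where h: "st = (64, I', R)" "I' 10 = int (100+2*k)"
        "\<forall>l<k. s l = ncol - 1" "agl {7,10} I' I" "\<forall>l<k. I' (101+2*l) = I (101+2*l)"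
        using A unfolding Inv_def by auto
      have f: "I' 11 = int (100+2*k)"
        using h(4) c(1) unfolding agl_def ctxI_def E_def by auto
      have v: "vl ncol k s + 1 = ncol^k" using vl_max[OF ncol1 h(3)] .
      show ?thesis
        by (rule wp_run[where n=1]) (use h f v in \<open>auto simp: Q_def agl_def\<close>)
    qed
  qed (rule that)
  have i: "Inv k (64, I(10 := 100), R)"
    unfolding Inv_def
    by (rule disjI1, rule exI[where x="I(10 := 100)"], rule exI[where x=0]) (use c in \<open>simp add: agl_def cur_def\<close>)
  have "wp P (63, I, R) Q (1 + (k*7 + 1))"
    by (rule wp_seq[OF s1]) (use lp i in simp)
  then show ?thesis unfolding Q_def .
qed

lemma cnt_eq: "digs s \<Longrightarrow> digs t \<Longrightarrow> vl ncol k s = vl ncol k t \<Longrightarrow> cnt s = cnt t"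
proof -
  assume a: "digs s" "digs t" "vl ncol k s = vl ncol k t"
  then have "\<forall>l<k. s l = t l" using vl_inj[of k s ncol t] by (simp add: digs_def)
  then have "SS s i = SS t i" for i unfolding SS_def by (intro sum.cong) auto
  then show ?thesis unfolding cnt_def by simp
qed

definition "BI I' s b \<longleftrightarrow> (vl ncol k s = 0 \<and> I' 9 = -1) \<or>
   (0 < vl ncol k s \<and> I' 9 = int (cnt b) \<and> (\<forall>t. digs t \<and> vl ncol k t < vl ncol k s \<longrightarrow> cnt t \<le> cnt b))"
definition "Fin st \<longleftrightarrow> (\<exists>I' R' b. st = (73::nat, I', R') \<and> ctxI I' \<and> ctxR R' \<and> bst I' b \<and> digs b
   \<and> (\<forall>t. digs t \<longrightarrow> cnt t \<le> cnt b))"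
definition "MInv n st \<longleftrightarrow> (0 < n \<and> (\<exists>I' R' s b. st = (34::nat, I', R') \<and> ctxI I' \<and> ctxR R' \<and> cur I' s \<and> digs s
   \<and> vl ncol k s + n = ncol^k \<and> bst I' b \<and> digs b \<and> BI I' s b)) \<or> (n = 0 \<and> Fin st)"

definition "citer = nrow*(k*7+10) + k*13 + 10"

lemma main_step:
  assumes "MInv (Suc n) st"
  shows "wp P st (MInv n) citer"
proof -
  obtain I R s b where h: "st = (34, I, R)" "ctxI I" "ctxR R" "cur I s" "digs s"
    "vl ncol k s + Suc n = ncol^k" "bst I b" "digs b" "BI I s b"
    using assms unfolding MInv_def by auto
  have r: "wp P (34, I, R) (\<lambda>(pc,I',R'). pc = 54 \<and> I' 8 = int (cnt s) \<and> agr {5,6,7,8,10,12} I' I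
     \<and> agr {0,1,4} R' R) (3 + (nrow * (k*7+10) + 1))" by (rule rows[OF h(2,3,4,5)])
  have after_rows: "wp P st2 (MInv n) ((k*6 + 4) + (1 + (k*7 + 1)))"
    if A: "(\<lambda>(pc,I',R'). pc = 54 \<and> I' 8 = int (cnt s) \<and> agr {5,6,7,8,10,12} I' I
     \<and> agr {0,1,4} R' R) st2" for st2
  proof -
    obtain I2 R2 where g: "st2 = (54, I2, R2)" "I2 8 = int (cnt s)" "agr {5,6,7,8,10,12} I2 I" "agr {0,1,4} R2 R"
      using tup[OF A] by auto
    have cI2: "ctxI I2" using h(2) g(3) unfolding ctxI_def agr_def by auto
    have cR2: "ctxR R2" using h(3) g(4) unfolding ctxR_def agr_def by (auto simp: H_def)
    have cur2: "cur I2 s" using h(4) g(3) unfolding cur_def agr_def by auto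
    have bst2: "bst I2 b" using h(7) g(3) unfolding bst_def agr_def by auto
    have I29: "I2 9 = I 9" using g(3) unfolding agr_def by auto
    have bb: "wp P (54, I2, R2) (\<lambda>(pc,I',R'). pc = 63 \<and> cur I' s \<and> agl {6,7,9,10} I' I2 \<and> R' = R2 \<and>
      ((int (cnt s) \<le> I2 9 \<and> I' 9 = I2 9 \<and> (\<forall>l<k. I' (101+2*l) = I2 (101+2*l))) \<or>
       (\<not> int (cnt s) \<le> I2 9 \<and> I' 9 = int (cnt s) \<and> bst I' s))) (k*6 + 4)"
      by (rule best[OF cI2 cur2 g(2)])
    have after_best: "wp P st3 (MInv n) (1 + (k*7 + 1))"
      if B: "(\<lambda>(pc,I',R'). pc = 63 \<and> cur I' s \<and> agl {6,7,9,10} I' I2 \<and> R' = R2 \<and>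
      ((int (cnt s) \<le> I2 9 \<and> I' 9 = I2 9 \<and> (\<forall>l<k. I' (101+2*l) = I2 (101+2*l))) \<or>
       (\<not> int (cnt s) \<le> I2 9 \<and> I' 9 = int (cnt s) \<and> bst I' s))) st3" for st3
    proof -
      obtain I3 where g3: "st3 = (63, I3, R2)" "cur I3 s" "agl {6,7,9,10} I3 I2"
        "(int (cnt s) \<le> I2 9 \<and> I3 9 = I2 9 \<and> (\<forall>l<k. I3 (101+2*l) = I2 (101+2*l))) \<or>
         (\<not> int (cnt s) \<le> I2 9 \<and> I3 9 = int (cnt s) \<and> bst I3 s)"
        using tup[OF B] by auto
      have cI3: "ctxI I3" using cI2 g3(3) unfolding ctxI_def agl_def by auto
      define b' where "b' = (if int (cnt s) \<le> I2 9 then b else s)"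
      have bst3: "bst I3 b'" using g3(4) bst2 unfolding b'_def bst_def by auto
      have db': "digs b'" using h(5,8) unfolding b'_def by auto
      have I39: "I3 9 = int (cnt b')" "\<forall>t. digs t \<and> vl ncol k t < vl ncol k s + 1 \<longrightarrow> cnt t \<le> cnt b'"
      proof -
        have eqs: "cnt t = cnt s" if "digs t" "vl ncol k t = vl ncol k s" for t
          using cnt_eq[OF that(1) h(5) that(2)] .
        show "I3 9 = int (cnt b')" "\<forall>t. digs t \<and> vl ncol k t < vl ncol k s + 1 \<longrightarrow> cnt t \<le> cnt b'"
        proof -
          consider (z) "vl ncol k s = 0" "I 9 = -1" | (p) "0 < vl ncol k s" "I 9 = int (cnt b)"
            "\<forall>t. digs t \<and> vl ncol k t < vl ncol k s \<longrightarrow> cnt t \<le> cnt b"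
            using h(9) unfolding BI_def by auto
          then have "I3 9 = int (cnt b') \<and> (\<forall>t. digs t \<and> vl ncol k t < vl ncol k s + 1 \<longrightarrow> cnt t \<le> cnt b')"
          proof cases
            case z
            then have nc: "\<not> int (cnt s) \<le> I2 9" using I29 by simp
            then show ?thesis using g3(4) eqs z unfolding b'_def by (auto simp: less_Suc_eq)
          next
            case p
            show ?thesis
            proof (cases "int (cnt s) \<le> I2 9")
              case True
              then have "cnt s \<le> cnt b" using I29 p by simp
              then show ?thesis using g3(4) True eqs p I29 unfolding b'_def
                by (auto simp: less_Suc_eq)
            next
              case False
              then have "cnt b < cnt s" using I29 p by simp
              then show ?thesis using g3(4) False eqs p unfolding b'_def
                by (auto simp: less_Suc_eq)
            qed
          qed
          then show "I3 9 = int (cnt b')" "\<forall>t. digs t \<and> vl ncol k t < vl ncol k s + 1 \<longrightarrow> cnt t \<le> cnt b'" by auto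
        qed
      qed
      have ii: "wp P (63, I3, R2) (\<lambda>(pc,I',R'). R' = R2 \<and> agl {7,10} I' I3 \<and> (\<forall>l<k. I' (101+2*l) = I3 (101+2*l)) \<and>
        ((pc = 34 \<and> (\<exists>s'. cur I' s' \<and> digs s' \<and> vl ncol k s' = vl ncol k s + 1)) \<or> (pc = 73 \<and> vl ncol k s + 1 = ncol^k))) (1 + (k*7 + 1))"
        by (rule inc[OF cI3 g3(2) h(5)])
      show ?thesis unfolding g3(1)
      proof (rule wp_mono[OF ii])
        fix st4 :: state assume C: "(\<lambda>(pc,I',R'). R' = R2 \<and> agl {7,10} I' I3 \<and> (\<forall>l<k. I' (101+2*l) = I3 (101+2*l)) \<and>
          ((pc = 34 \<and> (\<exists>s'. cur I' s' \<and> digs s' \<and> vl ncol k s' = vl ncol k s + 1)) \<or> (pc = 73 \<and> vl ncol k s + 1 = ncol^k))) st4"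
        obtain pc I4 where g4: "st4 = (pc, I4, R2)" "agl {7,10} I4 I3" "\<forall>l<k. I4 (101+2*l) = I3 (101+2*l)"
          "(pc = 34 \<and> (\<exists>s'. cur I4 s' \<and> digs s' \<and> vl ncol k s' = vl ncol k s + 1)) \<or> (pc = 73 \<and> vl ncol k s + 1 = ncol^k)"
          using tup[OF C] by auto
        have cI4: "ctxI I4" using cI3 g4(2) unfolding ctxI_def agl_def by auto
        have bst4: "bst I4 b'" using bst3 g4(3) unfolding bst_def by auto
        have I49: "I4 9 = I3 9" using g4(2) unfolding agl_def by auto
        from g4(4) show "MInv n st4"
        proof
          assume "pc = 34 \<and> (\<exists>s'. cur I4 s' \<and> digs s' \<and> vl ncol k s' = vl ncol k s + 1)"
          then obtain s' where s': "pc = 34" "cur I4 s'" "digs s'" "vl ncol k s' = vl ncol k s + 1" by blast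
          have "vl ncol k s' < ncol^k" using vl_lt[of k s' ncol] s'(3) by (simp add: digs_def)
          then have n0: "0 < n" using s'(4) h(6) by simp
          show ?thesis unfolding MInv_def
            apply (rule disjI1)
            apply (rule conjI[OF n0])
            apply (rule exI[of _ I4], rule exI[of _ R2], rule exI[of _ s'], rule exI[of _ b'])
            using g4(1) s' cI4 cR2 bst4 db' h(6) I39 I49 by (auto simp: BI_def)
        next
          assume "pc = 73 \<and> vl ncol k s + 1 = ncol^k"
          then have s': "pc = 73" "vl ncol k s + 1 = ncol^k" by auto
          have n0: "n = 0" using s'(2) h(6) by simp
          have all: "\<forall>t. digs t \<longrightarrow> cnt t \<le> cnt b'"
            using I39(2) vl_lt[of k _ ncol] s'(2) by (auto simp: digs_def)
          show ?thesis unfolding MInv_def Fin_def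
            using n0 g4(1) s'(1) cI4 cR2 bst4 db' all by auto
        qed
      qed simp
    qed
    show ?thesis
      unfolding g(1) by (rule wp_seq[OF bb]) (rule after_best)
  qed
  have "wp P (34, I, R) (MInv n) ((3 + (nrow * (k*7+10) + 1)) + ((k*6 + 4) + (1 + (k*7 + 1))))"
    by (rule wp_seq[OF r after_rows])
  then show ?thesis unfolding h(1) citer_def by (rule wp_mono) auto
qed

lemma main_loop: "MInv (ncol^k) st \<Longrightarrow> wp P st Fin (ncol^k * citer + 0)"
proof (rule wp_loop[where Inv=MInv and c=citer and d=0])
  fix n st assume "MInv (Suc n) st" then show "wp P st (MInv n) citer" by (rule main_step)
next
  fix st assume "MInv 0 st" then show "wp P st Fin 0" by (intro wp_run[where n=0]) (auto simp: MInv_def)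
qed

definition "XX b j = real (card {l. l < k \<and> b l = j}) * (1 / real k)"

lemma ph6:
  assumes c: "ctxI I" "ctxR R" "bst I b" "digs b"
  shows "wp P (73, I, R) (\<lambda>(pc,I',R'). pc = 86 \<and> agr {6,7,10} I' I \<and> (\<forall>j<ncol. R' (H+j) = XX b j)) (4 + (k*9 + 1))"
proof -
  define R1 where "R1 = R(5 := 1 / real k, 6 := real k)"
  have s1: "wp P (73, I, R) (\<lambda>st. st = (77::nat, I(10 := 100), R1)) 4"
    by (rule wp_run[where n=4]) (use c in \<open>simp_all add: ctxI_def R1_def fun_upd_twist\<close>)
  define Inv where "Inv n st \<longleftrightarrow> (\<exists>I' R' l0. st = (77::nat, I', R') \<and> l0 + n = k \<and> I' 10 = int (100 + 2*l0)
     \<and> agr {6,7,10} I' I \<and> R' 5 = 1 / real k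
     \<and> (\<forall>j<ncol. R' (H+j) = real (card {l. l < l0 \<and> b l = j}) * (1 / real k)))" for n st
  have lp: "wp P st (\<lambda>(pc,I',R'). pc = 86 \<and> agr {6,7,10} I' I \<and> (\<forall>j<ncol. R' (H+j) = XX b j)) (k*9 + 1)"
    if "Inv k st" for st
  proof (rule wp_loop[where Inv=Inv and c=9 and d=1])
    fix n st assume "Inv (Suc n) st"
    then obtain I' R' l0 where h: "st = (77, I', R')" "l0 + Suc n = k" "I' 10 = int (100 + 2*l0)"
      "agr {6,7,10} I' I" "R' 5 = 1 / real k"
      "\<forall>j<ncol. R' (H+j) = real (card {l. l < l0 \<and> b l = j}) * (1 / real k)"
      unfolding Inv_def by blast
    have l0: "l0 < k" using h(2) by simp
    have dl: "b l0 < ncol" using c(4) l0 by (simp add: digs_def)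
    have f: "I' 11 = int (100+2*k)" "I' 15 = 1" "I' 14 = 2" "I' 13 = 0" "I' 20 = int H"
      "I' (101+2*l0) = int (b l0)"
      using h(4) c(1,3) l0 unfolding agr_def ctxI_def bst_def E_def by auto
    have H8: "H \<ge> 8" by (simp add: H_def)
    show "wp P st (Inv n) 9"
    proof (rule wp_run[where n=9])
      show "Inv n (run P 9 st)" using h f l0 H8 dl
        apply (simp add: Inv_def del: of_nat_add of_nat_mult)
        apply (rule exI[of _ "Suc l0"])
        apply (auto simp: agr_def card_Suc_filter algebra_simps add_divide_distrib)
        done
    qed simp
  next
    fix st assume "Inv 0 st"
    then obtain I' R' where h: "st = (77, I', R')" "I' 10 = int (100 + 2*k)" "agr {6,7,10} I' I"
      "\<forall>j<ncol. R' (H+j) = XX b j"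
      unfolding Inv_def XX_def by auto
    have f: "I' 11 = int (100+2*k)" using h(3) c(1) unfolding agr_def ctxI_def E_def by auto
    show "wp P st (\<lambda>(pc,I',R'). pc = 86 \<and> agr {6,7,10} I' I \<and> (\<forall>j<ncol. R' (H+j) = XX b j)) 1"
      by (rule wp_run[where n=1]) (use h f in simp_all)
  qed (rule that)
  have i: "Inv k (77, I(10 := 100), R1)"
    unfolding Inv_def
    by (rule exI[where x="I(10 := 100)"], rule exI[where x=R1], rule exI[where x=0])
       (use c in \<open>auto simp: R1_def agr_def ctxR_def H_def\<close>)
  show ?thesis
    by (rule wp_seq[OF s1]) (use lp i in simp)
qed

lemma ph7:
  assumes c: "I 1 = int ncol" "I 13 = 0" "I 15 = 1" "I 20 = int H" "\<forall>j<ncol. R (H+j) = X j"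
  shows "wp P (86, I, R) (\<lambda>(pc,I',R'). pc = 93 \<and> (\<forall>j<ncol. R' j = X j)) (1 + (ncol*6 + 1))"
proof -
  have s1: "wp P (86, I, R) (\<lambda>st. st = (87::nat, I(5 := int ncol), R)) 1"
    by (rule wp_run[where n=1]) (use c in simp_all)
  define Inv where "Inv n st \<longleftrightarrow> (\<exists>I' R'. st = (87::nat, I', R') \<and> n \<le> ncol \<and> I' 5 = int n
     \<and> (\<forall>j. n \<le> j \<and> j < ncol \<longrightarrow> R' j = X j) \<and> (\<forall>j<ncol. R' (H+j) = X j) \<and> agr {5,6} I' I)" for n st
  have lp: "wp P st (\<lambda>(pc,I',R'). pc = 93 \<and> (\<forall>j<ncol. R' j = X j)) (ncol*6 + 1)" if "Inv ncol st" for st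
  proof (rule wp_loop[where Inv=Inv and c=6 and d=1])
    fix n st assume "Inv (Suc n) st"
    then obtain I' R' where h: "st = (87, I', R')" "Suc n \<le> ncol" "I' 5 = int (Suc n)"
      "\<forall>j. Suc n \<le> j \<and> j < ncol \<longrightarrow> R' j = X j" "\<forall>j<ncol. R' (H+j) = X j" "agr {5,6} I' I"
      unfolding Inv_def by blast
    have f: "I' 13 = 0" "I' 15 = 1" "I' 20 = int H" "R' (H + n) = X n"
      using h c by (auto simp: agr_def)
    have Hn: "H \<ge> ncol" by (simp add: H_def)
    show "wp P st (Inv n) 6"
    proof (rule wp_run[where n=6])
      show "Inv n (run P 6 st)" using h f Hn
        apply (simp add: Inv_def del: of_nat_add of_nat_mult)
        apply (auto simp: agr_def)
        done
    qed simp
  next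
    fix st assume "Inv 0 st"
    then obtain I' R' where h: "st = (87, I', R')" "I' 5 = 0"
      "\<forall>j<ncol. R' j = X j" "agr {5,6} I' I" unfolding Inv_def by auto
    have f: "I' 13 = 0" using h c by (auto simp: agr_def)
    show "wp P st (\<lambda>(pc,I',R'). pc = 93 \<and> (\<forall>j<ncol. R' j = X j)) 1"
      by (rule wp_run[where n=1]) (use h f in simp_all)
  qed (rule that)
  have i: "Inv ncol (87, I(5 := int ncol), R)"
    unfolding Inv_def using c by (auto simp: agr_def)
  show ?thesis
    by (rule wp_seq[OF s1]) (use lp i in simp)
qed

definition "Ttot = (6 + (nrow * 4 + 3)) + (1 + (N * 6 + 1)) + (3 + (L * 4 + 9)) + (ncol^k * citer + 0)
   + (4 + (k*9 + 1)) + (1 + (ncol*6 + 1))"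

lemma whole:
  assumes nr: "nrow \<ge> 1"
  shows "wp P (init_state A nrow ncol) (\<lambda>st. halted P st \<and> (\<exists>b. digs b \<and> (\<forall>t. digs t \<longrightarrow> cnt t \<le> cnt b)
      \<and> (\<forall>j<ncol. ram_output st j = XX b j))) Ttot"
proof -
  define I0 where "I0 = (\<lambda>a::nat. if a = 0 then int nrow else if a = 1 then int ncol else (0::int))"
  define R0 where "R0 = (\<lambda>a. if a < nrow * ncol then A (a div ncol) (a mod ncol) else (0::real))"
  have init: "init_state A nrow ncol = (0, I0, R0)" unfolding init_state_def I0_def R0_def by simp
  define Q1 where "Q1 = (\<lambda>(pc, I', R'). pc = (12::nat) \<and> I' 2 = int N \<and> I' 3 = int N + 8 \<and> I' 14 = 2 \<and> I' 15 = 1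
     \<and> I' 16 = int (4*m^2) \<and> I' 19 = 100 \<and> agr {2,3,5,7,14,15,16,19} I' I0 \<and> R' = R0)"
  have w1: "wp P (0, I0, R0) Q1 (6 + (nrow * 4 + 3))"
    unfolding Q1_def by (rule ph1) (use nr in \<open>simp_all add: I0_def\<close>)
  define Q2 where "Q2 = (\<lambda>(pc, I', R'). pc = (19::nat) \<and> agr {2,3,5,6,7,14,15,16,19} I' I0 \<and> I' 2 = int N \<and> I' 3 = int N + 8
     \<and> I' 14 = 2 \<and> I' 15 = 1 \<and> I' 16 = int (4*m^2) \<and> I' 19 = 100
     \<and> (\<forall>a<N. R' (N+8+a) = R0 a) \<and> (\<forall>a. 2*N+8 \<le> a \<longrightarrow> R' a = R0 a))"
  have w2: "wp P (0, I0, R0) Q2 ((6 + (nrow * 4 + 3)) + (1 + (N * 6 + 1)))"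
  proof (rule wp_seq[OF w1])
    fix st assume A: "Q1 st"
    then obtain I1 where g: "st = (12, I1, R0)" "I1 2 = int N" "I1 3 = int N + 8" "I1 14 = 2" "I1 15 = 1"
      "I1 16 = int (4*m^2)" "I1 19 = 100" "agr {2,3,5,7,14,15,16,19} I1 I0"
      unfolding Q1_def using tup[where st=st] by auto
    have f: "I1 13 = 0" using g(8) by (auto simp: agr_def I0_def)
    show "wp P st Q2 (1 + (N * 6 + 1))"
      unfolding g(1)
      by (rule wp_mono[OF ph2[OF g(2,3,5) f]]) (use g in \<open>auto simp: Q2_def agr_def\<close>)
  qed
  define Q3 where "Q3 = (\<lambda>(pc, I', R'). pc = (34::nat) \<and> ctxI I' \<and> ctxR R' \<and> cur I' (\<lambda>_. 0) \<and> bst I' (\<lambda>_. 0) \<and> I' 9 = -1)"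
  have w3: "wp P (0, I0, R0) Q3 (((6 + (nrow * 4 + 3)) + (1 + (N * 6 + 1))) + (3 + (L * 4 + 9)))"
  proof (rule wp_seq[OF w2])
    fix st assume A: "Q2 st"
    then obtain I2 R2 where g: "st = (19, I2, R2)" "agr {2,3,5,6,7,14,15,16,19} I2 I0" "I2 2 = int N" "I2 3 = int N + 8"
     "I2 14 = 2" "I2 15 = 1" "I2 16 = int (4*m^2)" "I2 19 = 100"
     "\<forall>a<N. R2 (N+8+a) = R0 a" "\<forall>a. 2*N+8 \<le> a \<longrightarrow> R2 a = R0 a"
      unfolding Q2_def using tup[where st=st] by auto
    have f: "I2 13 = 0" "I2 0 = int nrow" "I2 1 = int ncol" using g(2) by (auto simp: agr_def I0_def)
    show "wp P st Q3 (3 + (L * 4 + 9))"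
      unfolding g(1)
    proof (rule wp_mono[OF ph3[OF f(2,3,1) g(6,7,8,3,4)]])
      fix st3 :: state assume B: "(\<lambda>(pc, I', R'). pc = 34 \<and> I' 4 = int k \<and> I' 11 = int E \<and> I' 18 = - int k
       \<and> I' 9 = -1 \<and> I' 20 = int H \<and> R' 2 = real m \<and> R' 3 = - real k
       \<and> agr {4,9,11,17,18,20,21} I' I2 \<and> agr {2,3} R' R2) st3"
      then obtain I3 R3 where h: "st3 = (34, I3, R3)" "I3 4 = int k" "I3 11 = int E" "I3 18 = - int k"
        "I3 9 = -1" "I3 20 = int H" "R3 2 = real m" "R3 3 = - real k" "agr {4,9,11,17,18,20,21} I3 I2" "agr {2,3} R3 R2"
        using tup[where st=st3] by auto
      have cI: "ctxI I3" using h g f unfolding ctxI_def agr_def by auto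
      have Aeq: "R3 (N+8+i*ncol+j) = A i j" if "i < nrow" "j < ncol" for i j
      proof -
        have "i*ncol + j < (i+1)*ncol" using that by simp
        also have "(i+1)*ncol \<le> nrow*ncol" using that by (intro mult_right_mono) auto
        finally have lt: "i*ncol+j < N" unfolding N_def .
        have "R3 (N+8+i*ncol+j) = R2 (N+8+(i*ncol+j))" using h(10) by (auto simp: agr_def add.assoc)
        also have "\<dots> = R0 (i*ncol+j)" using g(9) lt by auto
        also have "\<dots> = A i j" using lt that unfolding R0_def N_def by simp
        finally show ?thesis .
      qed
      have Heq: "R3 (H+j) = 0" if "j < ncol" for j
      proof -
        have "R3 (H+j) = R2 (H+j)" using h(10) by (auto simp: agr_def H_def)
        also have "\<dots> = R0 (H+j)" using g(10) by (auto simp: H_def)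
        also have "\<dots> = 0" unfolding R0_def H_def N_def by simp
        finally show ?thesis .
      qed
      have cR: "ctxR R3" unfolding ctxR_def using h(7,8) Aeq Heq by auto
      have cu: "cur I3 (\<lambda>_. 0)" "bst I3 (\<lambda>_. 0)" using h(9) g(2) unfolding cur_def bst_def agr_def I0_def by auto
      show "Q3 st3" unfolding Q3_def using h(1,5) cI cR cu by simp
    qed simp
  qed
  have w4: "wp P (0, I0, R0) Fin ((((6 + (nrow * 4 + 3)) + (1 + (N * 6 + 1))) + (3 + (L * 4 + 9))) + (ncol^k * citer + 0))"
  proof (rule wp_seq[OF w3])
    fix st assume A: "Q3 st"
    then obtain I3 R3 where g: "st = (34, I3, R3)" "ctxI I3" "ctxR R3" "cur I3 (\<lambda>_. 0)" "bst I3 (\<lambda>_. 0)" "I3 9 = -1"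
      unfolding Q3_def using tup[where st=st] by auto
    have "MInv (ncol^k) st"
      unfolding MInv_def
      apply (rule disjI1)
      apply (rule conjI)
      using ncol1 apply simp
      apply (rule exI[of _ I3], rule exI[of _ R3], rule exI[of _ "\<lambda>_. 0"], rule exI[of _ "\<lambda>_. 0"])
      using g ncol1 by (auto simp: digs_def vl_def BI_def)
    then show "wp P st Fin (ncol^k * citer + 0)" by (rule main_loop)
  qed
  define Q6 where "Q6 = (\<lambda>(pc::nat, I'::nat\<Rightarrow>int, R'::nat\<Rightarrow>real). \<exists>b. pc = 86 \<and> digs b \<and> (\<forall>t. digs t \<longrightarrow> cnt t \<le> cnt b)
      \<and> I' 1 = int ncol \<and> I' 13 = 0 \<and> I' 15 = 1 \<and> I' 20 = int H \<and> (\<forall>j<ncol. R' (H+j) = XX b j))"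
  have w5: "wp P (0, I0, R0) Q6 (((((6 + (nrow * 4 + 3)) + (1 + (N * 6 + 1))) + (3 + (L * 4 + 9))) + (ncol^k * citer + 0)) + (4 + (k*9 + 1)))"
  proof (rule wp_seq[OF w4])
    fix st assume "Fin st"
    then obtain I4 R4 b where g: "st = (73, I4, R4)" "ctxI I4" "ctxR R4" "bst I4 b" "digs b" "\<forall>t. digs t \<longrightarrow> cnt t \<le> cnt b"
      unfolding Fin_def by auto
    show "wp P st Q6 (4 + (k*9 + 1))"
      unfolding g(1)
      by (rule wp_mono[OF ph6[OF g(2,3,4,5)]]) (use g in \<open>auto simp: Q6_def agr_def ctxI_def\<close>)
  qed
  have w6: "wp P (0, I0, R0) (\<lambda>st. halted P st \<and> (\<exists>b. digs b \<and> (\<forall>t. digs t \<longrightarrow> cnt t \<le> cnt b)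
      \<and> (\<forall>j<ncol. ram_output st j = XX b j))) Ttot"
    unfolding Ttot_def
  proof (rule wp_seq[OF w5])
    fix st assume A: "Q6 st"
    then obtain I5 R5 b where g: "st = (86, I5, R5)" "digs b" "\<forall>t. digs t \<longrightarrow> cnt t \<le> cnt b"
      "I5 1 = int ncol" "I5 13 = 0" "I5 15 = 1" "I5 20 = int H" "\<forall>j<ncol. R5 (H+j) = XX b j"
      unfolding Q6_def using tup[where st=st] by auto
    show "wp P st (\<lambda>st. halted P st \<and> (\<exists>b. digs b \<and> (\<forall>t. digs t \<longrightarrow> cnt t \<le> cnt b)
      \<and> (\<forall>j<ncol. ram_output st j = XX b j))) (1 + (ncol*6 + 1))"
      unfolding g(1)
      by (rule wp_mono[OF ph7[OF g(4,5,6,7,8)]]) (use g in \<open>auto simp: halted_def ram_output_def\<close>)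
  qed
  then show ?thesis unfolding init .
qed

lemma fiber: "\<forall>l<(K::nat). b l < (n::nat) \<Longrightarrow> (\<Sum>j<n. f j * real (card {l. l < K \<and> b l = j})) = (\<Sum>l<K. f (b l))"
proof (induction K)
  case 0 then show ?case by simp
next
  case (Suc K)
  have bK: "b K < n" using Suc.prems by simp
  have "(\<Sum>j<n. f j * real (card {l. l < Suc K \<and> b l = j}))
      = (\<Sum>j<n. f j * real (card {l. l < K \<and> b l = j})) + (\<Sum>j<n. if b K = j then f j else 0)"
  proof -
    have "f j * real (card {l. l < Suc K \<and> b l = j}) = f j * real (card {l. l < K \<and> b l = j}) + (if b K = j then f j else 0)" for j
      by (simp add: card_Suc_filter algebra_simps)
    then show ?thesis by (simp add: sum.distrib)
  qed
  also have "(\<Sum>j<n. if b K = j then f j else 0) = f (b K)" using bK by (simp add: sum.delta)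
  finally show ?case using Suc by simp
qed

lemma correct:
  assumes Ab: "\<forall>i<nrow. \<forall>j<ncol. \<bar>A i j\<bar> \<le> 1" and eps: "1 / real m \<le> eps"
    and db: "digs b" and opt: "\<forall>t. digs t \<longrightarrow> cnt t \<le> cnt b" and x: "\<forall>j<ncol. x j = XX b j"
  shows "eps_mfs_solution eps A nrow ncol x"
proof -
  have kpos: "0 < real k" using k_pos by simp
  have mpos: "0 < real m" using m1 by simp
  have dbl: "\<forall>l<k. b l < ncol" using db by (simp add: digs_def)
  have mv: "mat_vec A ncol x i = SS b i / real k" for i
  proof -
    have "mat_vec A ncol x i = (\<Sum>j<ncol. A i j * real (card {l. l < k \<and> b l = j})) / real k"
      unfolding mat_vec_def sum_divide_distrib using x by (intro sum.cong) (auto simp: XX_def)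
    also have "\<dots> = SS b i / real k" using fiber[OF dbl, of "A i"] by (simp add: SS_def)
    finally show ?thesis .
  qed
  have simp_x: "x \<in> prob_simplex ncol"
  proof -
    have "(\<Sum>j<ncol. x j) = (\<Sum>j<ncol. 1 * real (card {l. l < k \<and> b l = j})) / real k"
      unfolding sum_divide_distrib using x by (intro sum.cong) (auto simp: XX_def)
    also have "\<dots> = 1" using fiber[OF dbl, of "\<lambda>_. 1"] kpos by simp
    finally show ?thesis using x unfolding prob_simplex_def XX_def by auto
  qed
  define S where "S = {num_feasible A nrow ncol 0 y | y. y \<in> prob_simplex ncol}"
  have finS: "finite S"
  proof (rule finite_subset)
    show "S \<subseteq> {..nrow}"
    proof
      fix v assume "v \<in> S"
      then obtain y where v: "v = num_feasible A nrow ncol 0 y" unfolding S_def by auto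
      have "v \<le> card {..<nrow}" unfolding v num_feasible_def by (rule card_mono) auto
      then show "v \<in> {..nrow}" by simp
    qed
  qed simp
  have neS: "S \<noteq> {}"
  proof -
    have "(\<lambda>j. if j = 0 then 1 else 0 :: real) \<in> prob_simplex ncol"
      using ncol1 unfolding prob_simplex_def by (simp add: sum.delta)
    then show ?thesis unfolding S_def by blast
  qed
  obtain y where y: "y \<in> prob_simplex ncol" "mfs_opt A nrow ncol = num_feasible A nrow ncol 0 y"
    using Max_in[OF finS neS] unfolding mfs_opt_def S_def[symmetric] unfolding S_def by auto
  obtain t where t: "\<forall>l<k. t l < ncol"
    "\<forall>i<nrow. 0 \<le> mat_vec A ncol y i \<longrightarrow> - real k \<le> real m * (\<Sum>l<k. A i (t l))"
    using sparsify[OF y(1) Ab m1 k_def L_gt] by blast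
  have "num_feasible A nrow ncol 0 y \<le> cnt t"
    unfolding num_feasible_def cnt_def SS_def using t(2) by (intro card_mono) auto
  also have "cnt t \<le> cnt b" using opt t(1) by (simp add: digs_def)
  also have "cnt b \<le> num_feasible A nrow ncol eps x"
    unfolding num_feasible_def cnt_def
  proof (intro card_mono)
    show "{i. i < nrow \<and> - real k \<le> real m * SS b i} \<subseteq> {i. i < nrow \<and> - eps \<le> mat_vec A ncol x i}"
    proof safe
      fix i assume i: "i < nrow" "- real k \<le> real m * SS b i"
      have "- (1 / real m) \<le> SS b i / real k"
        using i(2) kpos mpos by (simp add: field_simps)
      then show "- eps \<le> mat_vec A ncol x i" using eps mv by simp
    qed
  qed simp
  finally show ?thesis unfolding eps_mfs_solution_def using simp_x y(2) by simp
qed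

lemma time_nat:
  assumes nr: "nrow \<ge> 1"
  shows "Ttot \<le> 70 * (N+2)^(2*k+1)"
proof -
  define n where "n = N + 2"
  have n2: "n \<ge> 2" unfolding n_def by simp
  have nN: "nrow \<le> N" "ncol \<le> N" unfolding N_def using nr ncol1 by simp_all
  have "1 \<le> 4*m^2" using m1 by (simp add: Suc_le_eq)
  from mult_le_mono1[OF this, of "L+1"] have Lk: "L \<le> k" unfolding k_def by simp
  have "(k+1)*1 \<le> (k+1)*n" using n2 by (intro mult_left_mono) auto
  then have P1: "k + 1 \<le> (k+1)*n" by simp
  have h2: "citer \<le> 30*((k+1)*n)"
  proof -
    have "nrow*(k*7+10) \<le> n*(k*7+10)" using nN unfolding n_def by (intro mult_right_mono) auto
    also have "\<dots> \<le> n*(10*(k+1))" by (intro mult_left_mono) auto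
    finally have "nrow*(k*7+10) \<le> 10*((k+1)*n)" by (simp add: algebra_simps)
    then show ?thesis unfolding citer_def using P1 by linarith
  qed
  have h1: "ncol^k \<le> n^k" using nN unfolding n_def by (intro power_mono) auto
  have h3: "ncol^k * citer \<le> 30*(k+1)*n^(k+1)"
  proof -
    have "ncol^k * citer \<le> n^k * (30*((k+1)*n))" using h1 h2 by (rule mult_le_mono)
    also have "\<dots> = 30*(k+1)*n^(k+1)" by (simp add: algebra_simps)
    finally show ?thesis .
  qed
  have nk: "n \<le> n^(k+1)" using n2 by (simp add: self_le_power)
  have h4: "(k+1)*n \<le> (k+1)*n^(k+1)" using nk by (intro mult_left_mono) auto
  have kn0: "k * 1 \<le> k * n" using n2 by (intro mult_left_mono) auto
  then have kn: "k \<le> k * n" by simp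
  have e: "(k+1)*n = k*n + n" by (simp add: algebra_simps)
  have nN2: "nrow \<le> n" "ncol \<le> n" "N \<le> n" using nN unfolding n_def by simp_all
  have rest: "Ttot \<le> ncol^k * citer + 40*((k+1)*n)"
  proof -
    have "6 + (nrow * 4 + 3) + (1 + (N * 6 + 1)) + (3 + (L * 4 + 9)) + (4 + (k * 9 + 1)) + (1 + (ncol * 6 + 1))
       \<le> 40 * (k * n + n)"
    proof -
      have "6 + (nrow * 4 + 3) + (1 + (N * 6 + 1)) + (3 + (L * 4 + 9)) + (4 + (k * 9 + 1)) + (1 + (ncol * 6 + 1))
        \<le> 30 + 16 * n + 13 * k" using nN2 Lk by simp
      also have "\<dots> \<le> 40 * (k * n) + 40 * n" using kn n2 by linarith
      also have "\<dots> = 40 * (k * n + n)" by simp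
      finally show ?thesis .
    qed
    then show ?thesis unfolding Ttot_def e by linarith
  qed
  have "Ttot \<le> 70*(k+1)*n^(k+1)" using rest h3 h4 by linarith
  also have "k + 1 \<le> n^k"
  proof -
    have "k < 2^k" by (rule less_exp)
    also have "(2::nat)^k \<le> n^k" using n2 by (intro power_mono) auto
    finally show ?thesis by simp
  qed
  then have "70*(k+1)*n^(k+1) \<le> 70*n^k*n^(k+1)" by (intro mult_right_mono) auto
  also have "\<dots> = 70*n^(2*k+1)" by (simp add: power_add[symmetric] algebra_simps mult_2)
  finally show ?thesis unfolding n_def .
qed

lemma L_log:
  assumes nr: "nrow \<ge> 1"
  shows "real (L + 1) \<le> 6 * ln (real (N+2))"
proof -
  define n where "n = N + 2"
  have n2: "n \<ge> 2" unfolding n_def by simp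
  have "nrow * 1 \<le> nrow*ncol" using ncol1 by (intro mult_left_mono) auto
  then have nN: "nrow \<le> n" unfolding n_def N_def by linarith
  have pw: "2^L \<le> 2*n"
  proof (cases L)
    case 0 then show ?thesis using n2 by simp
  next
    case (Suc L')
    then have "2^L' \<le> nrow" using L_min by simp
    then show ?thesis using Suc nN by simp
  qed
  have ln2: "1/2 \<le> ln (2::real)" using exp_half_le2 ln_ge_iff[of 2 "1/2"] by simp
  have lnn: "ln 2 \<le> ln (real n)" using n2 by simp
  have "real L * ln 2 = ln (2^L)" by (simp add: ln_realpow)
  also have "\<dots> \<le> ln (2 * real n)"
  proof -
    have pwr: "(2::real)^L \<le> 2 * real n" using pw by (metis of_nat_le_iff of_nat_mult of_nat_numeral of_nat_power)
    then show ?thesis using n2 by simp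
  qed
  also have "\<dots> = ln 2 + ln (real n)" using n2 by (simp add: ln_mult)
  finally have a: "real L * ln 2 \<le> ln 2 + ln (real n)" .
  have "real L \<le> 1 + 2 * ln (real n)"
  proof -
    have "real L * ln 2 \<le> ln 2 + 2 * ln (real n) * ln 2"
    proof -
      have "ln (real n) * 1 \<le> ln (real n) * (2 * ln 2)" using ln2 lnn
        by (intro mult_left_mono) auto
      then have "ln (real n) \<le> 2 * ln (real n) * ln 2" by (simp add: algebra_simps)
      then show ?thesis using a by linarith
    qed
    then have "real L * ln 2 \<le> (1 + 2 * ln (real n)) * ln 2" by (simp add: algebra_simps)
    then show ?thesis using ln2 by (simp add: mult_le_cancel_right)
  qed
  moreover have h5: "1/2 \<le> ln (real n)" using ln2 lnn by linarith
  ultimately have "real (L+1) \<le> 6 * ln (real n)" by simp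
  then show ?thesis unfolding n_def .
qed

lemma time_bound:
  assumes nr: "nrow \<ge> 1"
  shows "real Ttot \<le> real (50*m^2+70) * real (N+2) powr (real (50*m^2+70) * ln (real (N+2)))"
proof -
  define n where "n = real (N + 2)"
  have n2: "n \<ge> 2" unfolding n_def by simp
  have ln2: "1/2 \<le> ln (2::real)" using exp_half_le2 ln_ge_iff[of 2 "1/2"] by simp
  have lnn: "1/2 \<le> ln n" using n2 ln2 by (smt (verit) ln_le_cancel_iff)
  have kb: "real k \<le> 24 * real m^2 * ln n"
  proof -
    have "real k = 4 * real m^2 * real (L+1)" unfolding k_def by (simp only: of_nat_mult of_nat_power of_nat_numeral)
    also have "\<dots> \<le> 4 * real m^2 * (6 * ln n)" using L_log[OF nr] unfolding n_def
      by (intro mult_left_mono) auto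
    finally show ?thesis by simp
  qed
  have ex: "real (2*k+1) \<le> real (50*m^2+70) * ln n"
  proof -
    have "real (2*k+1) = 2 * real k + 1" by simp
    also have "\<dots> \<le> 48 * real m^2 * ln n + 2 * ln n" using kb lnn by linarith
    also have "\<dots> \<le> (50 * real m^2 + 70) * ln n" using lnn
      by (simp add: algebra_simps)
    finally show ?thesis by simp
  qed
  have "real Ttot \<le> 70 * n^(2*k+1)" using time_nat[OF nr] unfolding n_def
    by (metis of_nat_le_iff of_nat_mult of_nat_numeral of_nat_power)
  also have "n^(2*k+1) = n powr real (2*k+1)" by (rule powr_realpow[symmetric]) (use n2 in simp)
  also have "70 * \<dots> \<le> real (50*m^2+70) * n powr (real (50*m^2+70) * ln n)"
  proof (rule mult_mono)
    show "n powr real (2*k+1) \<le> n powr (real (50*m^2+70) * ln n)" using ex n2 by (intro powr_mono) auto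
  qed auto
  finally show ?thesis unfolding n_def .
qed

end

lemma nrow0:
  fixes A :: "nat \<Rightarrow> nat \<Rightarrow> real"
  assumes "ncol \<ge> 1"
  shows "halted (prog m) (run (prog m) 2 (init_state A 0 ncol))
    \<and> eps_mfs_solution eps A 0 ncol (ram_output (run (prog m) 2 (init_state A 0 ncol)))"
proof -
  define x where "x = (\<lambda>a::nat. if a = 0 then 1 else (0::real))"
  have h: "halted (prog m) (run (prog m) 2 (init_state A 0 ncol))"
    by (simp add: init_state_def halted_def)
  have o: "ram_output (run (prog m) 2 (init_state A 0 ncol)) = x"
    by (rule ext) (simp add: init_state_def ram_output_def x_def)
  have xs: "x \<in> prob_simplex ncol" using assms unfolding prob_simplex_def x_def by (simp add: sum.delta)
  have "{num_feasible A 0 ncol 0 y | y. y \<in> prob_simplex ncol} = {0}"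
    using xs by (auto simp: num_feasible_def)
  then have "mfs_opt A 0 ncol = 0" unfolding mfs_opt_def by simp
  then show ?thesis unfolding o using h xs
    by (simp add: eps_mfs_solution_def)
qed

theorem theorem4:
  fixes eps :: real
  assumes "eps > 0"
  shows "\<exists>(P :: instr list) (C :: real). \<forall>(A :: nat \<Rightarrow> nat \<Rightarrow> real) nrow ncol.
           ncol \<ge> 1 \<longrightarrow> (\<forall>i<nrow. \<forall>j<ncol. \<bar>A i j\<bar> \<le> 1) \<longrightarrow>
           (\<exists>t. real t \<le> C * real (nrow * ncol + 2) powr (C * ln (real (nrow * ncol + 2)))
                \<and> halted P (run P t (init_state A nrow ncol))
                \<and> eps_mfs_solution eps A nrow ncol (ram_output (run P t (init_state A nrow ncol))))"
proof -
  define m where "m = nat \<lceil>1 / eps\<rceil>"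
  have m1: "m \<ge> 1" unfolding m_def using assms by (simp add: Suc_le_eq)
  have me: "1 / real m \<le> eps"
  proof -
    have "1 / eps \<le> real m" unfolding m_def by (rule real_nat_ceiling_ge)
    then show ?thesis using assms m1 by (simp add: field_simps)
  qed
  define C where "C = real (50*m^2+70)"
  show ?thesis
  proof (intro exI[of _ "prog m"] exI[of _ C] allI impI)
    fix A :: "nat \<Rightarrow> nat \<Rightarrow> real" and nrow ncol :: nat
    assume nc: "ncol \<ge> 1" and Ab: "\<forall>i<nrow. \<forall>j<ncol. \<bar>A i j\<bar> \<le> 1"
    have C70: "C \<ge> 70" unfolding C_def by simp
    show "\<exists>t. real t \<le> C * real (nrow * ncol + 2) powr (C * ln (real (nrow * ncol + 2)))
                \<and> halted (prog m) (run (prog m) t (init_state A nrow ncol))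
                \<and> eps_mfs_solution eps A nrow ncol (ram_output (run (prog m) t (init_state A nrow ncol)))"
    proof (cases "nrow = 0")
      case True
      have "real (2::nat) \<le> C * real (nrow * ncol + 2) powr (C * ln (real (nrow * ncol + 2)))"
      proof -
        have "1 \<le> real (nrow * ncol + 2) powr (C * ln (real (nrow * ncol + 2)))"
          using C70 by (intro ge_one_powr_ge_zero) auto
        then have "70 * 1 \<le> C * real (nrow * ncol + 2) powr (C * ln (real (nrow * ncol + 2)))"
          using C70 by (intro mult_mono) auto
        then show ?thesis by simp
      qed
      then show ?thesis using nrow0[OF nc, of m A eps] True by blast
    next
      case False
      then have nr: "nrow \<ge> 1" by simp
      interpret c: ctx m nrow ncol A by unfold_locales (use m1 nc in auto)
      obtain t where t: "t \<le> c.Ttot" "halted (prog m) (run (prog m) t (init_state A nrow ncol))"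
        "\<exists>b. c.digs b \<and> (\<forall>t. c.digs t \<longrightarrow> c.cnt t \<le> c.cnt b)
      \<and> (\<forall>j<ncol. ram_output (run (prog m) t (init_state A nrow ncol)) j = c.XX b j)"
        using c.whole[OF nr] unfolding wp_def by blast
      obtain b where b: "c.digs b" "\<forall>t. c.digs t \<longrightarrow> c.cnt t \<le> c.cnt b"
        "\<forall>j<ncol. ram_output (run (prog m) t (init_state A nrow ncol)) j = c.XX b j" using t(3) by blast
      have sol: "eps_mfs_solution eps A nrow ncol (ram_output (run (prog m) t (init_state A nrow ncol)))"
        by (rule c.correct[OF Ab me b])
      have "real t \<le> real c.Ttot" using t(1) by simp
      also have "\<dots> \<le> C * real (nrow * ncol + 2) powr (C * ln (real (nrow * ncol + 2)))"
        using c.time_bound[OF nr] unfolding C_def c.N_def .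
      finally show ?thesis using t(2) sol by blast
    qed
  qed
qed

end
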